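(* Let $(M,g)$ be a $d$-dimensional Lorentzian spacetime, $d\ge 4$ (no field equations are assumed), equipped with a null basis $(\ell,n,m_{(2)},\dots,m_{(d-1)})$, and consider a linearized perturbation of the metric (and of the basis) about this background. Then the first-order perturbation $\Omega^{(1)}_{ij}$ of the Weyl components $\Omega_{ij}$ is gauge invariant if and only if $\ell$ is a multiple WAND of the background spacetime, or equivalently, if and only if $\Psi^{(0)}_{ijk}=0$ and $\Omega^{(0)}_{ij}=0$.
   Context: The null basis satisfies $\ell\cdot\ell=n\cdot n=\ell\cdot m_{(i)}=n\cdot m_{(i)}=0$, $\ell\cdot n=1$, $m_{(i)}\cdot m_{(j)}=\delta_{ij}$, with indices $i,j,k,\dots$ ranging over $2,\dots,d-1$. With $C_{abcd}$ the Weyl tensor, define the frame components $\Omega_{ij}=C_{abcd}\ell^a m_{(i)}^b\ell^c m_{(j)}^d$ and $\Psi_{ijk}=C_{abcd}\ell^a m_{(i)}^b m_{(j)}^c m_{(k)}^d$. The vector $\ell$ is a multiple WAND (Weyl aligned null direction of multiplicity at least 2) iff $\Omega_{ij}=0$ and $\Psi_{ijk}=0$. For any quantity $X$ write $X=X^{(0)}+X^{(1)}$ with $X^{(0)}$ its background value and $X^{(1)}$ its first-order perturbation. A quantity $X^{(1)}$ is called gauge invariant if it is unchanged to first order both under infinitesimal coordinate transformations (under which a scalar transforms as $X^{(1)}\mapsto X^{(1)}+\xi^\mu\partial_\mu X^{(0)}$) and under infinitesimal changes of the null basis, i.e. infinitesimal Lorentz transformations generated by boosts ($\ell\mapsto\lambda\ell$,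 $n\mapsto\lambda^{-1}n$, $m_{(i)}\mapsto m_{(i)}$), spins ($m_{(i)}\mapsto X_{ij}m_{(j)}$ with $X\in SO(d-2)$), null rotations about $\ell$ ($\ell\mapsto\ell$, $n\mapsto n+z_i m_{(i)}-\tfrac12 z^2\ell$, $m_{(i)}\mapsto m_{(i)}-z_i\ell$) and null rotations about $n$ ($n\mapsto n$, $\ell\mapsto \ell+z_i m_{(i)}-\tfrac12 z^2 n$, $m_{(i)}\mapsto m_{(i)}-z_i n$). *)

theory Defs
  imports "HOL-Analysis.Analysis"
begin

(* Local coordinate model of the spacetime: an open set U of real^'d,
   with d = CARD('d) coordinates x^a, a :: 'd. *)

definition pd :: "'d::finite \<Rightarrow> (real^'d \<Rightarrow> real) \<Rightarrow> real^'d \<Rightarrow> real" where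
  "pd a f p = deriv (\<lambda>t. f (p + t *\<^sub>R axis a 1)) 0"

definition C_inf_on :: "(real^'d::finite) set \<Rightarrow> (real^'d \<Rightarrow> real) \<Rightarrow> bool" where
  "C_inf_on U f \<longleftrightarrow> (\<forall>ds :: 'd list. (foldr pd ds f) differentiable_on U)"

definition gdot :: "(real^'d::finite \<Rightarrow> real^'d^'d) \<Rightarrow> real^'d \<Rightarrow> real^'d \<Rightarrow> real^'d \<Rightarrow> real" where
  "gdot g p u v = (\<Sum>a\<in>UNIV. \<Sum>b\<in>UNIV. g p $ a $ b * u $ a * v $ b)"

definition christoffel :: "(real^'d::finite \<Rightarrow> real^'d^'d) \<Rightarrow> real^'d \<Rightarrow> 'd \<Rightarrow> 'd \<Rightarrow> 'd \<Rightarrow> real" where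
  "christoffel g p a b c = (1/2) * (\<Sum>e\<in>UNIV. matrix_inv (g p) $ a $ e *
      (pd b (\<lambda>q. g q $ e $ c) p + pd c (\<lambda>q. g q $ e $ b) p - pd e (\<lambda>q. g q $ b $ c) p))"

definition riemann_up :: "(real^'d::finite \<Rightarrow> real^'d^'d) \<Rightarrow> real^'d \<Rightarrow> 'd \<Rightarrow> 'd \<Rightarrow> 'd \<Rightarrow> 'd \<Rightarrow> real" where
  "riemann_up g p a b c d =
     pd c (\<lambda>q. christoffel g q a d b) p - pd d (\<lambda>q. christoffel g q a c b) p
     + (\<Sum>e\<in>UNIV. christoffel g p a c e * christoffel g p e d b
                 - christoffel g p a d e * christoffel g p e c b)"

definition riemann :: "(real^'d::finite \<Rightarrow> real^'d^'d) \<Rightarrow> real^'d \<Rightarrow> 'd \<Rightarrow> 'd \<Rightarrow> 'd \<Rightarrow> 'd \<Rightarrow> real" where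
  "riemann g p a b c d = (\<Sum>e\<in>UNIV. g p $ a $ e * riemann_up g p e b c d)"

definition ricci :: "(real^'d::finite \<Rightarrow> real^'d^'d) \<Rightarrow> real^'d \<Rightarrow> 'd \<Rightarrow> 'd \<Rightarrow> real" where
  "ricci g p b d = (\<Sum>a\<in>UNIV. riemann_up g p a b a d)"

definition scalar_curv :: "(real^'d::finite \<Rightarrow> real^'d^'d) \<Rightarrow> real^'d \<Rightarrow> real" where
  "scalar_curv g p = (\<Sum>b\<in>UNIV. \<Sum>d\<in>UNIV. matrix_inv (g p) $ b $ d * ricci g p b d)"

definition weyl_comp :: "(real^'d::finite \<Rightarrow> real^'d^'d) \<Rightarrow> real^'d \<Rightarrow> 'd \<Rightarrow> 'd \<Rightarrow> 'd \<Rightarrow> 'd \<Rightarrow> real" where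
  "weyl_comp g p a b c d =
     (let n = real CARD('d) in
       riemann g p a b c d
       - (1 / (n - 2)) * (g p $ a $ c * ricci g p b d - g p $ a $ d * ricci g p b c
                          - g p $ b $ c * ricci g p a d + g p $ b $ d * ricci g p a c)
       + scalar_curv g p / ((n - 1) * (n - 2)) * (g p $ a $ c * g p $ b $ d - g p $ a $ d * g p $ b $ c))"

definition weyl :: "(real^'d::finite \<Rightarrow> real^'d^'d) \<Rightarrow> real^'d \<Rightarrow> real^'d \<Rightarrow> real^'d \<Rightarrow> real^'d \<Rightarrow> real^'d \<Rightarrow> real" where
  "weyl g p u v w x = (\<Sum>a\<in>UNIV. \<Sum>b\<in>UNIV. \<Sum>c\<in>UNIV. \<Sum>d\<in>UNIV.
       weyl_comp g p a b c d * u $ a * v $ b * w $ c * x $ d)"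

abbreviation frame_idx :: "'d::finite itself \<Rightarrow> nat set" where
  "frame_idx _ \<equiv> {2..<CARD('d)}"

definition null_frame :: "(real^'d::finite \<Rightarrow> real^'d^'d) \<Rightarrow> (real^'d) set \<Rightarrow>
    (real^'d \<Rightarrow> real^'d) \<Rightarrow> (real^'d \<Rightarrow> real^'d) \<Rightarrow> (nat \<Rightarrow> real^'d \<Rightarrow> real^'d) \<Rightarrow> bool" where
  "null_frame g U l nn m \<longleftrightarrow> (\<forall>p\<in>U.
      gdot g p (l p) (l p) = 0 \<and> gdot g p (nn p) (nn p) = 0 \<and> gdot g p (l p) (nn p) = 1 \<and>
      (\<forall>i\<in>frame_idx TYPE('d). gdot g p (l p) (m i p) = 0 \<and> gdot g p (nn p) (m i p) = 0) \<and>
      (\<forall>i\<in>frame_idx TYPE('d). \<forall>j\<in>frame_idx TYPE('d).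
          gdot g p (m i p) (m j p) = (if i = j then 1 else 0)))"

definition Omega0 :: "(real^'d::finite \<Rightarrow> real^'d^'d) \<Rightarrow> (real^'d \<Rightarrow> real^'d) \<Rightarrow>
    (nat \<Rightarrow> real^'d \<Rightarrow> real^'d) \<Rightarrow> real^'d \<Rightarrow> nat \<Rightarrow> nat \<Rightarrow> real" where
  "Omega0 g l m p i j = weyl g p (l p) (m i p) (l p) (m j p)"

definition Psi0 :: "(real^'d::finite \<Rightarrow> real^'d^'d) \<Rightarrow> (real^'d \<Rightarrow> real^'d) \<Rightarrow>
    (nat \<Rightarrow> real^'d \<Rightarrow> real^'d) \<Rightarrow> real^'d \<Rightarrow> nat \<Rightarrow> nat \<Rightarrow> nat \<Rightarrow> real" where
  "Psi0 g l m p i j k = weyl g p (l p) (m i p) (m j p) (m k p)"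

(* l is a multiple WAND at p (as characterized in the paper) *)
definition multiple_WAND :: "(real^'d::finite \<Rightarrow> real^'d^'d) \<Rightarrow> (real^'d \<Rightarrow> real^'d) \<Rightarrow>
    (nat \<Rightarrow> real^'d \<Rightarrow> real^'d) \<Rightarrow> real^'d \<Rightarrow> bool" where
  "multiple_WAND g l m p \<longleftrightarrow>
     (\<forall>i\<in>frame_idx TYPE('d). \<forall>j\<in>frame_idx TYPE('d). Omega0 g l m p i j = 0) \<and>
     (\<forall>i\<in>frame_idx TYPE('d). \<forall>j\<in>frame_idx TYPE('d). \<forall>k\<in>frame_idx TYPE('d). Psi0 g l m p i j k = 0)"

(* First-order change of Omega^(1)_ij under the gauge transformations.
   Coordinate transformation generated by xi:  Omega^(1) -> Omega^(1) + xi^mu d_mu Omega^(0). *)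
definition coord_change where
  "coord_change g l m (xi :: real^'d::finite) p i j =
     (\<Sum>mu\<in>UNIV. xi $ mu * pd mu (\<lambda>q. Omega0 g l m q i j) p)"

(* Infinitesimal Lorentz transformations: derivative at t = 0 of Omega computed in the
   transformed frame (one-parameter family through the identity). *)
definition boost_change where
  "boost_change g (l :: real^'d::finite \<Rightarrow> real^'d) m (eps :: real) p i j =
     deriv (\<lambda>t. weyl g p ((1 + t * eps) *\<^sub>R l p) (m i p) ((1 + t * eps) *\<^sub>R l p) (m j p)) 0"

definition spin_change where
  "spin_change g (l :: real^'d::finite \<Rightarrow> real^'d) m (A :: nat \<Rightarrow> nat \<Rightarrow> real) p i j =
     deriv (\<lambda>t. weyl g p (l p) (m i p + t *\<^sub>R (\<Sum>k\<in>frame_idx TYPE('d). A i k *\<^sub>R m k p))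
                          (l p) (m j p + t *\<^sub>R (\<Sum>k\<in>frame_idx TYPE('d). A j k *\<^sub>R m k p))) 0"

definition nullrot_l_change where
  "nullrot_l_change g (l :: real^'d::finite \<Rightarrow> real^'d) m (z :: nat \<Rightarrow> real) p i j =
     deriv (\<lambda>t. weyl g p (l p) (m i p - (t * z i) *\<^sub>R l p) (l p) (m j p - (t * z j) *\<^sub>R l p)) 0"

definition nullrot_n_change where
  "nullrot_n_change g (l :: real^'d::finite \<Rightarrow> real^'d) nn m (z :: nat \<Rightarrow> real) p i j =
     (let L = (\<lambda>t. l p + t *\<^sub>R (\<Sum>k\<in>frame_idx TYPE('d). z k *\<^sub>R m k p)
                   - (t^2 * (\<Sum>k\<in>frame_idx TYPE('d). (z k)^2) / 2) *\<^sub>R nn p) in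
      deriv (\<lambda>t. weyl g p (L t) (m i p - (t * z i) *\<^sub>R nn p) (L t) (m j p - (t * z j) *\<^sub>R nn p)) 0)"

(* Omega^(1)_ij is gauge invariant: unchanged to first order under all infinitesimal
   coordinate transformations and all infinitesimal boosts, spins (so(d-2) generators,
   i.e. antisymmetric A) and null rotations about l and about n. *)
definition Omega1_gauge_invariant where
  "Omega1_gauge_invariant g (U :: (real^'d::finite) set) l nn m \<longleftrightarrow>
     (\<forall>p\<in>U. \<forall>i\<in>frame_idx TYPE('d). \<forall>j\<in>frame_idx TYPE('d).
        (\<forall>xi. coord_change g l m xi p i j = 0) \<and>
        (\<forall>eps. boost_change g l m eps p i j = 0) \<and>
        (\<forall>A. (\<forall>a b. A a b = - A b a) \<longrightarrow> spin_change g l m A p i j = 0) \<and>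
        (\<forall>z. nullrot_l_change g l m z p i j = 0) \<and>
        (\<forall>z. nullrot_n_change g l nn m z p i j = 0))"

end

theory Submission
  imports Defs
begin

definition ldiff :: "'d::finite \<Rightarrow> (real^'d \<Rightarrow> real) \<Rightarrow> real^'d \<Rightarrow> bool" where
  "ldiff a f p \<longleftrightarrow> (\<lambda>t. f (p + t *\<^sub>R axis a 1)) differentiable (at 0)"

lemma pd_deriv: "ldiff a f p \<Longrightarrow> ((\<lambda>t. f (p + t *\<^sub>R axis a 1)) has_real_derivative pd a f p) (at 0)"
  unfolding ldiff_def pd_def using DERIV_deriv_iff_real_differentiable by blast

lemma pd_eqI: "((\<lambda>t. f (p + t *\<^sub>R axis a 1)) has_real_derivative D) (at 0) \<Longrightarrow> pd a f p = D"
  by (simp add: pd_def DERIV_imp_deriv)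

lemma ldiff_const[simp]: "ldiff a (\<lambda>q. c) p" by (simp add: ldiff_def)
lemma ldiff_add: "ldiff a f p \<Longrightarrow> ldiff a h p \<Longrightarrow> ldiff a (\<lambda>q. f q + h q) p"
  by (simp add: ldiff_def)
lemma ldiff_diff: "ldiff a f p \<Longrightarrow> ldiff a h p \<Longrightarrow> ldiff a (\<lambda>q. f q - h q) p"
  by (simp add: ldiff_def)
lemma ldiff_mult: "ldiff a f p \<Longrightarrow> ldiff a h p \<Longrightarrow> ldiff a (\<lambda>q. f q * h q) p"
  unfolding ldiff_def by (rule differentiable_mult)
lemma ldiff_divide: "ldiff a f p \<Longrightarrow> ldiff a h p \<Longrightarrow> h p \<noteq> 0 \<Longrightarrow> ldiff a (\<lambda>q. f q / h q) p"
  unfolding ldiff_def by (rule differentiable_divide) auto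
lemma ldiff_sum: "finite S \<Longrightarrow> (\<And>i. i \<in> S \<Longrightarrow> ldiff a (f i) p) \<Longrightarrow> ldiff a (\<lambda>q. \<Sum>i\<in>S. f i q) p"
  unfolding ldiff_def by (rule differentiable_sum) auto
lemma ldiff_prod: "finite S \<Longrightarrow> (\<And>i. i \<in> S \<Longrightarrow> ldiff a (f i) p) \<Longrightarrow> ldiff a (\<lambda>q. \<Prod>i\<in>S. f i q) p"
proof (induction S rule: finite_induct)
  case empty then show ?case by simp
next
  case (insert x F)
  then show ?case by (simp add: ldiff_mult)
qed

lemma ldiff_of_differentiable: "f differentiable (at p) \<Longrightarrow> ldiff a f p"
  unfolding ldiff_def
  by (rule differentiable_compose[where g="\<lambda>t. p + t *\<^sub>R axis a 1" and f=f]) auto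

lemma pd_add: "ldiff a f p \<Longrightarrow> ldiff a h p \<Longrightarrow> pd a (\<lambda>q. f q + h q) p = pd a f p + pd a h p"
  by (rule pd_eqI) (rule DERIV_add[OF pd_deriv pd_deriv])
lemma pd_diff: "ldiff a f p \<Longrightarrow> ldiff a h p \<Longrightarrow> pd a (\<lambda>q. f q - h q) p = pd a f p - pd a h p"
  by (rule pd_eqI) (rule DERIV_diff[OF pd_deriv pd_deriv])
lemma pd_mult: "ldiff a f p \<Longrightarrow> ldiff a h p \<Longrightarrow> pd a (\<lambda>q. f q * h q) p = pd a f p * h p + f p * pd a h p"
  by (rule pd_eqI) (use DERIV_mult[OF pd_deriv[of a f p] pd_deriv[of a h p]] in \<open>simp add: mult.commute\<close>)
lemma pd_const[simp]: "pd a (\<lambda>q. c) p = 0"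
  by (rule pd_eqI) simp
lemma pd_cmult: "ldiff a f p \<Longrightarrow> pd a (\<lambda>q. c * f q) p = c * pd a f p"
  by (rule pd_eqI) (rule DERIV_cmult[OF pd_deriv])
lemma pd_sum: "finite S \<Longrightarrow> (\<And>i. i \<in> S \<Longrightarrow> ldiff a (f i) p) \<Longrightarrow> pd a (\<lambda>q. \<Sum>i\<in>S. f i q) p = (\<Sum>i\<in>S. pd a (f i) p)"
  by (rule pd_eqI) (rule DERIV_sum, rule pd_deriv, auto)

lemma eventually_line_in_open:
  fixes p :: "real^'d::finite"
  assumes "open U" "p \<in> U"
  shows "eventually (\<lambda>t. p + t *\<^sub>R axis a 1 \<in> U) (nhds (0::real))"
proof -
  obtain r where r: "r > 0" "ball p r \<subseteq> U" using assms open_contains_ball by blast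
  have "\<forall>t::real. dist t 0 < r \<longrightarrow> p + t *\<^sub>R axis a 1 \<in> U"
  proof (intro allI impI)
    fix t :: real assume "dist t 0 < r"
    then have "dist p (p + t *\<^sub>R axis a 1) < r" by (simp add: dist_norm)
    then show "p + t *\<^sub>R axis a 1 \<in> U" using r(2) by auto
  qed
  then show ?thesis unfolding eventually_nhds_metric using r(1) by blast
qed

lemma pd_cong:
  fixes p :: "real^'d::finite"
  assumes "open U" "p \<in> U" "\<And>q. q \<in> U \<Longrightarrow> f q = h q"
  shows "pd a f p = pd a h p"
  unfolding pd_def
  by (rule deriv_cong_ev[OF eventually_mono[OF eventually_line_in_open[OF assms(1,2), of a]]]) (auto simp: assms(3))

lemma ldiff_cong:
  fixes p :: "real^'d::finite"
  assumes "open U" "p \<in> U" "\<And>q. q \<in> U \<Longrightarrow> f q = h q" "ldiff a f p"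
  shows "ldiff a h p"
proof -
  have "eventually (\<lambda>t. f (p + t *\<^sub>R axis a 1) = h (p + t *\<^sub>R axis a 1)) (nhds 0)"
    by (rule eventually_mono[OF eventually_line_in_open[OF assms(1,2), of a]]) (auto simp: assms(3))
  moreover have "((\<lambda>t. f (p + t *\<^sub>R axis a 1)) has_real_derivative pd a f p) (at 0)"
    using assms(4) by (rule pd_deriv)
  ultimately have "((\<lambda>t. h (p + t *\<^sub>R axis a 1)) has_real_derivative pd a f p) (at 0)"
    using DERIV_cong_ev[of 0 0 "\<lambda>t. f (p + t *\<^sub>R axis a 1)" "\<lambda>t. h (p + t *\<^sub>R axis a 1)" "pd a f p" "pd a f p"] by blast
  then show ?thesis unfolding ldiff_def
    using has_field_derivative_imp_has_derivative differentiableI by blast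
qed


lemma line_has_deriv:
  fixes f :: "real^'d::finite \<Rightarrow> real"
  assumes "(f has_derivative F) (at x)" "x = y + s *\<^sub>R e"
  shows "((\<lambda>s. f (y + s *\<^sub>R e)) has_real_derivative F e) (at s)"
proof -
  have L: "((\<lambda>s. y + s *\<^sub>R e) has_derivative (\<lambda>h. h *\<^sub>R e)) (at s)"
    by (auto intro!: derivative_eq_intros)
  have "((\<lambda>s. f (y + s *\<^sub>R e)) has_derivative (\<lambda>h. F (h *\<^sub>R e))) (at s)"
    using has_derivative_compose[OF L, of f F] assms by simp
  moreover have "(\<lambda>h. F (h *\<^sub>R e)) = (\<lambda>h. F e * h)"
    using has_derivative_bounded_linear[OF assms(1)]
    by (auto simp: fun_eq_iff bounded_linear.linear linear_scale mult.commute intro: ext)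
  ultimately show ?thesis by (simp add: has_field_derivative_def)
qed

lemma pd_frechet:
  fixes f :: "real^'d::finite \<Rightarrow> real"
  assumes "(f has_derivative F) (at p)"
  shows "pd a f p = F (axis a 1)"
  by (rule pd_eqI) (rule line_has_deriv[OF assms], simp)

lemma line_deriv_pd:
  fixes f :: "real^'d::finite \<Rightarrow> real"
  assumes "f differentiable (at (y + s *\<^sub>R axis a 1))"
  shows "((\<lambda>s. f (y + s *\<^sub>R axis a 1)) has_real_derivative pd a f (y + s *\<^sub>R axis a 1)) (at s)"
proof -
  obtain F where F: "(f has_derivative F) (at (y + s *\<^sub>R axis a 1))" using assms differentiable_def by blast
  show ?thesis using line_has_deriv[OF F refl] pd_frechet[OF F, of a] by simp
qed

lemma schwarz_half:
  fixes f :: "real^'d::finite \<Rightarrow> real"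
  assumes fU: "\<And>x. x \<in> ball p r \<Longrightarrow> f differentiable (at x)"
    and Lc: "bounded_linear Lc"
    and del: "\<And>y. norm (y - p) < \<delta> \<Longrightarrow> \<bar>pd c f y - pd c f p - Lc (y - p)\<bar> \<le> \<epsilon> * norm (y - p)"
    and h: "0 < h" "2 * h < r" "2 * h < \<delta>" and e: "\<epsilon> \<ge> 0"
  shows "\<bar>f (p + h *\<^sub>R axis c 1 + h *\<^sub>R axis d 1) - f (p + h *\<^sub>R axis c 1) - f (p + h *\<^sub>R axis d 1) + f p
          - h^2 * Lc (axis d 1)\<bar> \<le> 3 * \<epsilon> * h^2"
proof -
  define u :: "real^'d" where "u = axis c 1"
  define v :: "real^'d" where "v = axis d 1"
  have nu: "norm u = 1" "norm v = 1" by (simp_all add: u_def v_def)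
  define \<phi> where "\<phi> s = f (p + h *\<^sub>R v + s *\<^sub>R u) - f (p + s *\<^sub>R u)" for s
  have inb: "p + a *\<^sub>R v + b *\<^sub>R u \<in> ball p r" if "0 \<le> a" "a \<le> h" "0 \<le> b" "b \<le> h" for a b
  proof -
    have "norm (a *\<^sub>R v + b *\<^sub>R u) \<le> norm (a *\<^sub>R v) + norm (b *\<^sub>R u)" by (rule norm_triangle_ineq)
    also have "\<dots> = a + b" using that nu by simp
    moreover have "norm (- (a *\<^sub>R v) - b *\<^sub>R u) = norm (a *\<^sub>R v + b *\<^sub>R u)"
      by (metis minus_add_distrib norm_minus_cancel diff_conv_add_uminus)
    ultimately show ?thesis using that h by (simp add: dist_commute[of p] dist_norm add.assoc)
  qed
  have inb2: "p + b *\<^sub>R u \<in> ball p r" if "0 \<le> b" "b \<le> h" for b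
    using inb[of 0 b] that h by simp
  have der: "DERIV \<phi> s :> (pd c f (p + h *\<^sub>R v + s *\<^sub>R u) - pd c f (p + s *\<^sub>R u))" if "0 \<le> s" "s \<le> h" for s
    unfolding \<phi>_def u_def
    by (rule DERIV_diff; rule line_deriv_pd; rule fU) (use inb[OF _ _ that, of h] inb2[OF that] h in \<open>auto simp: u_def\<close>)
  obtain \<xi> where xi: "0 < \<xi>" "\<xi> < h" "\<phi> h - \<phi> 0 = (h - 0) * (pd c f (p + h *\<^sub>R v + \<xi> *\<^sub>R u) - pd c f (p + \<xi> *\<^sub>R u))"
    using MVT2[OF h(1) der] by blast
  have n1: "norm (h *\<^sub>R v + \<xi> *\<^sub>R u) \<le> h + \<xi>"
    using norm_triangle_ineq[of "h *\<^sub>R v" "\<xi> *\<^sub>R u"] nu xi h by simp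
  have n2: "norm (\<xi> *\<^sub>R u) = \<xi>" using nu xi by simp
  have E1: "\<bar>pd c f (p + h *\<^sub>R v + \<xi> *\<^sub>R u) - pd c f p - Lc (h *\<^sub>R v + \<xi> *\<^sub>R u)\<bar> \<le> \<epsilon> * (h + \<xi>)"
  proof -
    have "\<bar>pd c f (p + h *\<^sub>R v + \<xi> *\<^sub>R u) - pd c f p - Lc (h *\<^sub>R v + \<xi> *\<^sub>R u)\<bar>
        \<le> \<epsilon> * norm (h *\<^sub>R v + \<xi> *\<^sub>R u)"
      using del[of "p + h *\<^sub>R v + \<xi> *\<^sub>R u"] n1 xi h by (simp add: add.assoc)
    also have "\<dots> \<le> \<epsilon> * (h + \<xi>)" using n1 e by (simp add: mult_left_mono)
    finally show ?thesis .
  qed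
  have E2: "\<bar>pd c f (p + \<xi> *\<^sub>R u) - pd c f p - Lc (\<xi> *\<^sub>R u)\<bar> \<le> \<epsilon> * \<xi>"
    using del[of "p + \<xi> *\<^sub>R u"] n2 xi h by simp
  have lin: "Lc (h *\<^sub>R v + \<xi> *\<^sub>R u) - Lc (\<xi> *\<^sub>R u) = h * Lc v"
    using Lc by (simp add: bounded_linear.linear linear_add linear_scale)
  have "\<bar>(pd c f (p + h *\<^sub>R v + \<xi> *\<^sub>R u) - pd c f (p + \<xi> *\<^sub>R u)) - h * Lc v\<bar> \<le> \<epsilon> * (h + \<xi>) + \<epsilon> * \<xi>"
    using E1 E2 lin by linarith
  also have "\<dots> \<le> 3 * \<epsilon> * h" using xi e by (simp add: algebra_simps mult_left_mono)
  finally have B: "\<bar>(pd c f (p + h *\<^sub>R v + \<xi> *\<^sub>R u) - pd c f (p + \<xi> *\<^sub>R u)) - h * Lc v\<bar> \<le> 3 * \<epsilon> * h" .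
  have "(\<phi> h - \<phi> 0) - h^2 * Lc v = h * ((pd c f (p + h *\<^sub>R v + \<xi> *\<^sub>R u) - pd c f (p + \<xi> *\<^sub>R u)) - h * Lc v)"
    using xi by (simp add: power2_eq_square algebra_simps)
  then have "\<bar>(\<phi> h - \<phi> 0) - h^2 * Lc v\<bar> = h * \<bar>(pd c f (p + h *\<^sub>R v + \<xi> *\<^sub>R u) - pd c f (p + \<xi> *\<^sub>R u)) - h * Lc v\<bar>"
    using h by (simp add: abs_mult)
  also have "\<dots> \<le> h * (3 * \<epsilon> * h)" using B h by (simp add: mult_left_mono)
  finally have "\<bar>(\<phi> h - \<phi> 0) - h^2 * Lc v\<bar> \<le> 3 * \<epsilon> * h^2" by (simp add: power2_eq_square algebra_simps)
  moreover have "\<phi> h - \<phi> 0 = f (p + h *\<^sub>R u + h *\<^sub>R v) - f (p + h *\<^sub>R u) - f (p + h *\<^sub>R v) + f p"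
    by (simp add: \<phi>_def add_ac)
  ultimately show ?thesis by (simp add: u_def v_def)
qed

lemma schwarz:
  fixes f :: "real^'d::finite \<Rightarrow> real"
  assumes U: "open U" "p \<in> U" and f: "f differentiable_on U"
    and fc: "pd c f differentiable_on U" and fd: "pd d f differentiable_on U"
  shows "pd c (pd d f) p = pd d (pd c f) p"
proof -
  have fU: "\<And>x. x \<in> U \<Longrightarrow> f differentiable (at x)" using f U differentiable_on_eq_differentiable_at by blast
  obtain Lc where Lc: "(pd c f has_derivative Lc) (at p)" using fc U differentiable_on_eq_differentiable_at differentiable_def by blast
  obtain Ld where Ld: "(pd d f has_derivative Ld) (at p)" using fd U differentiable_on_eq_differentiable_at differentiable_def by blast
  obtain r where r: "r > 0" "ball p r \<subseteq> U" using U open_contains_ball by blast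
  have eq1: "pd d (pd c f) p = Lc (axis d 1)" by (rule pd_frechet[OF Lc])
  have eq2: "pd c (pd d f) p = Ld (axis c 1)" by (rule pd_frechet[OF Ld])
  have bnd: "\<bar>Lc (axis d 1) - Ld (axis c 1)\<bar> \<le> 6 * \<epsilon>" if e: "\<epsilon> > 0" for \<epsilon>
  proof -
    obtain d1 where d1: "d1 > 0" "\<And>y. norm (y - p) < d1 \<Longrightarrow> norm (pd c f y - pd c f p - Lc (y - p)) \<le> \<epsilon> * norm (y - p)"
      using Lc e unfolding has_derivative_at_alt by blast
    obtain d2 where d2: "d2 > 0" "\<And>y. norm (y - p) < d2 \<Longrightarrow> norm (pd d f y - pd d f p - Ld (y - p)) \<le> \<epsilon> * norm (y - p)"
      using Ld e unfolding has_derivative_at_alt by blast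
    define h where "h = min (min d1 d2) r / 4"
    have h: "0 < h" "2 * h < r" "2 * h < d1" "2 * h < d2" using d1 d2 r by (auto simp: h_def)
    have fb: "\<And>x. x \<in> ball p r \<Longrightarrow> f differentiable (at x)" using fU r by blast
    have A: "\<bar>f (p + h *\<^sub>R axis c 1 + h *\<^sub>R axis d 1) - f (p + h *\<^sub>R axis c 1) - f (p + h *\<^sub>R axis d 1) + f p
          - h^2 * Lc (axis d 1)\<bar> \<le> 3 * \<epsilon> * h^2"
      by (rule schwarz_half[OF fb has_derivative_bounded_linear[OF Lc], where \<delta>=d1]) (use d1 h e in auto)
    have B: "\<bar>f (p + h *\<^sub>R axis d 1 + h *\<^sub>R axis c 1) - f (p + h *\<^sub>R axis d 1) - f (p + h *\<^sub>R axis c 1) + f p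
          - h^2 * Ld (axis c 1)\<bar> \<le> 3 * \<epsilon> * h^2"
      by (rule schwarz_half[OF fb has_derivative_bounded_linear[OF Ld], where \<delta>=d2]) (use d2 h e in auto)
    have "p + h *\<^sub>R axis d 1 + h *\<^sub>R axis c 1 = p + h *\<^sub>R axis c 1 + h *\<^sub>R axis d 1" by (simp add: add_ac)
    note eq = this
    have "\<bar>h^2 * Lc (axis d 1) - h^2 * Ld (axis c 1)\<bar> \<le> 6 * \<epsilon> * h^2"
      using A B[unfolded eq] by linarith
    moreover have "\<bar>h^2 * Lc (axis d 1) - h^2 * Ld (axis c 1)\<bar> = h^2 * \<bar>Lc (axis d 1) - Ld (axis c 1)\<bar>"
      by (simp only: right_diff_distrib[symmetric] abs_mult) simp
    ultimately have "h^2 * \<bar>Lc (axis d 1) - Ld (axis c 1)\<bar> \<le> h^2 * (6 * \<epsilon>)"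
      by (simp add: mult_ac)
    then show ?thesis using h by simp
  qed
  have "Lc (axis d 1) = Ld (axis c 1)"
  proof (rule ccontr)
    assume "Lc (axis d 1) \<noteq> Ld (axis c 1)"
    then have "\<bar>Lc (axis d 1) - Ld (axis c 1)\<bar> > 0" by simp
    then show False using bnd[of "\<bar>Lc (axis d 1) - Ld (axis c 1)\<bar> / 12"] by simp
  qed
  then show ?thesis using eq1 eq2 by simp
qed


definition gm :: "real^'d::finite^'d \<Rightarrow> real^'d \<Rightarrow> real^'d \<Rightarrow> real" where
  "gm G u v = (\<Sum>a\<in>UNIV. \<Sum>b\<in>UNIV. G $ a $ b * u $ a * v $ b)"

lemma gdot_gm: "gdot g p u v = gm (g p) u v" by (simp add: gdot_def gm_def)

definition gv :: "real^'d::finite^'d \<Rightarrow> real^'d \<Rightarrow> real^'d" where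
  "gv G u = (\<chi> b. \<Sum>a\<in>UNIV. G $ a $ b * u $ a)"

lemma gm_inner: "gm G u v = gv G u \<bullet> v"
  unfolding gm_def gv_def inner_vec_def
  by (subst sum.swap) (simp add: sum_distrib_right)

lemma gm_add2: "gm G u (x + y) = gm G u x + gm G u y" by (simp only: gm_inner inner_add_right)
lemma gm_scale2: "gm G u (c *\<^sub>R x) = c * gm G u x" by (simp only: gm_inner inner_scaleR_right)
lemma gm_sum2: "gm G u (\<Sum>i\<in>S. f i) = (\<Sum>i\<in>S. gm G u (f i))" by (simp only: gm_inner inner_sum_right)

lemma gm_Gv: "(\<Sum>c\<in>UNIV. u $ c * (G *v x) $ c) = gm G u x"
  unfolding gm_def matrix_vector_mult_def
  by (simp add: sum_distrib_left) (intro sum.cong refl, simp add: mult_ac)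

locale frame_pt =
  fixes G :: "real^'d::finite^'d" and l n :: "real^'d" and m :: "nat \<Rightarrow> real^'d"
  assumes symG: "\<And>a b. G $ a $ b = G $ b $ a"
    and card4: "CARD('d) \<ge> 4"
    and ll: "gm G l l = 0" and nn: "gm G n n = 0" and ln: "gm G l n = 1"
    and lm: "\<And>i. i \<in> {2..<CARD('d)} \<Longrightarrow> gm G l (m i) = 0"
    and nm: "\<And>i. i \<in> {2..<CARD('d)} \<Longrightarrow> gm G n (m i) = 0"
    and mm: "\<And>i j. i \<in> {2..<CARD('d)} \<Longrightarrow> j \<in> {2..<CARD('d)} \<Longrightarrow> gm G (m i) (m j) = (if i = j then 1 else 0)"
begin


lemma gm_sym: "gm G u v = gm G v u"
  unfolding gm_def by (subst sum.swap) (simp add: symG mult_ac)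

definition K :: "real^'d^'d" where
  "K = (\<chi> a c. l $ a * n $ c + n $ a * l $ c + (\<Sum>k\<in>{2..<CARD('d)}. m k $ a * m k $ c))"

lemma K_sym: "K $ a $ c = K $ c $ a"
  by (simp add: K_def mult_ac add_ac)

lemma K_mulv: "K *v y = (\<Sum>c\<in>UNIV. n $ c * y $ c) *\<^sub>R l + (\<Sum>c\<in>UNIV. l $ c * y $ c) *\<^sub>R n
     + (\<Sum>k\<in>{2..<CARD('d)}. (\<Sum>c\<in>UNIV. m k $ c * y $ c) *\<^sub>R m k)"
  unfolding K_def matrix_vector_mult_def vec_eq_iff
  apply (simp add: ring_distribs sum.distrib sum_distrib_left sum_distrib_right)
  apply (subst (2) sum.swap)
  apply (simp add: mult_ac)
  done

lemma Phi: "K *v (G *v x) = gm G n x *\<^sub>R l + gm G l x *\<^sub>R n + (\<Sum>k\<in>{2..<CARD('d)}. gm G (m k) x *\<^sub>R m k)"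
  by (simp add: K_mulv gm_Gv)

lemma Phi_l: "K *v (G *v l) = l"
proof -
  have "(\<Sum>k\<in>{2..<CARD('d)}. gm G (m k) l *\<^sub>R m k) = 0" using lm by (simp add: gm_sym[of "m _" l])
  then show ?thesis by (simp add: Phi ll gm_sym[of n l] ln)
qed

lemma Phi_n: "K *v (G *v n) = n"
proof -
  have "(\<Sum>k\<in>{2..<CARD('d)}. gm G (m k) n *\<^sub>R m k) = 0" using nm by (simp add: gm_sym[of "m _" n])
  then show ?thesis by (simp add: Phi nn ln)
qed

lemma Phi_m: assumes "j \<in> {2..<CARD('d)}" shows "K *v (G *v m j) = m j"
proof -
  have "(\<Sum>k\<in>{2..<CARD('d)}. gm G (m k) (m j) *\<^sub>R m k) = (\<Sum>k\<in>{2..<CARD('d)}. (if k = j then m k else 0))"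
    by (rule sum.cong) (use assms mm in auto)
  also have "\<dots> = m j" using assms by (simp add: sum.delta)
  finally show ?thesis using assms by (simp add: Phi gm_sym[of "m j" n] gm_sym[of "m j" l] nm lm)
qed

definition S :: "(real^'d) set" where "S = insert l (insert n (m ` {2..<CARD('d)}))"

lemma distinct_frame:
  shows "l \<noteq> n" and "l \<notin> m ` {2..<CARD('d)}" and "n \<notin> m ` {2..<CARD('d)}" and "inj_on m {2..<CARD('d)}"
proof -
  show "l \<noteq> n" using ll ln by auto
  show "l \<notin> m ` {2..<CARD('d)}" using ln nm gm_sym[of n l] by force
  show "n \<notin> m ` {2..<CARD('d)}" using ln lm by force
  show "inj_on m {2..<CARD('d)}"
  proof (rule inj_onI)
    fix i j assume "i \<in> {2..<CARD('d)}" "j \<in> {2..<CARD('d)}" "m i = m j"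
    then show "i = j" using mm[of i i] mm[of i j] by (auto split: if_splits)
  qed
qed

lemma card_S: "card S = CARD('d)"
proof -
  have "card (m ` {2..<CARD('d)}) = CARD('d) - 2" using distinct_frame(4) by (simp add: card_image)
  then show ?thesis using distinct_frame card4 by (simp add: S_def)
qed

lemma sum_S: "(\<Sum>v\<in>S. f v) = f l + f n + (\<Sum>k\<in>{2..<CARD('d)}. f (m k))"
  using distinct_frame by (simp add: S_def sum.reindex add.assoc)

lemma indep_S: "independent S"
  unfolding independent_explicit
proof (intro conjI allI impI ballI)
  show "finite S" by (simp add: S_def)
next
  fix c v assume z: "(\<Sum>v\<in>S. c v *\<^sub>R v) = 0" and v: "v \<in> S"
  then have z': "c l *\<^sub>R l + c n *\<^sub>R n + (\<Sum>k\<in>{2..<CARD('d)}. c (m k) *\<^sub>R m k) = 0" by (simp add: sum_S)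
  have "gm G w (c l *\<^sub>R l + c n *\<^sub>R n + (\<Sum>k\<in>{2..<CARD('d)}. c (m k) *\<^sub>R m k)) = 0" for w
    using z' by (simp add: gm_inner)
  then have e: "c l * gm G w l + c n * gm G w n + (\<Sum>k\<in>{2..<CARD('d)}. c (m k) * gm G w (m k)) = 0" for w
    by (simp add: gm_add2 gm_scale2 gm_sum2)
  have cl: "c l = 0" using e[of n] nm by (simp add: nn gm_sym[of n l] ln)
  have cn: "c n = 0" using e[of l] lm by (simp add: ll ln)
  have cm: "c (m j) = 0" if "j \<in> {2..<CARD('d)}" for j
  proof -
    have "(\<Sum>k\<in>{2..<CARD('d)}. c (m k) * gm G (m j) (m k)) = (\<Sum>k\<in>{2..<CARD('d)}. if k = j then c (m k) else 0)"
      by (rule sum.cong) (use that mm in auto)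
    then show ?thesis using e[of "m j"] that by (simp add: gm_sym[of "m j" l] gm_sym[of "m j" n] lm nm sum.delta)
  qed
  show "c v = 0" using v cl cn cm by (auto simp: S_def)
qed

lemma span_S: "span S = UNIV"
proof -
  have "UNIV \<subseteq> span S"
    by (rule card_ge_dim_independent[OF _ indep_S]) (simp_all add: card_S)
  then show ?thesis by auto
qed

lemma KG: "K ** G = mat 1"
proof -
  have "(\<lambda>x. K *v (G *v x)) x = (\<lambda>x. x) x" for x
  proof (rule linear_eq_on_span[of _ _ S])
    show "linear (\<lambda>x. K *v (G *v x))" by (simp add: matrix_vector_mul_assoc)
    show "linear (\<lambda>x::real^'d. x)" by (simp add: linear_iff)
    show "x \<in> span S" by (simp add: span_S)
    fix x assume "x \<in> S" then show "K *v (G *v x) = x"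
      by (auto simp: S_def Phi_l Phi_n Phi_m)
  qed
  then show ?thesis by (simp add: matrix_eq matrix_vector_mul_assoc)
qed

lemma GK: "G ** K = mat 1" using KG matrix_left_right_inverse by blast

lemma invG: "invertible G" unfolding invertible_def using KG GK by blast

lemma matinv: "matrix_inv G = K"
proof -
  have "G ** matrix_inv G = mat 1 \<and> matrix_inv G ** G = mat 1"
    unfolding matrix_inv_def by (rule someI[of _ K]) (simp add: KG GK)
  then have "matrix_inv G = (K ** G) ** matrix_inv G" by (simp add: KG)
  also have "\<dots> = K" by (simp add: matrix_mul_assoc[symmetric] \<open>G ** matrix_inv G = mat 1 \<and> _\<close>)
  finally show ?thesis .
qed

end


lemma matinv_props:
  fixes A :: "real^'d::finite^'d"
  assumes "invertible A"
  shows "A ** matrix_inv A = mat 1" "matrix_inv A ** A = mat 1"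
proof -
  have "A ** matrix_inv A = mat 1 \<and> matrix_inv A ** A = mat 1"
    using assms unfolding invertible_def matrix_inv_def by (rule someI_ex)
  then show "A ** matrix_inv A = mat 1" "matrix_inv A ** A = mat 1" by auto
qed

lemma matinv_cramer:
  fixes A :: "real^'d::finite^'d"
  assumes "invertible A"
  shows "matrix_inv A $ i $ j = det (\<chi> r s. if s = i then axis j 1 $ r else A $ r $ s) / det A"
proof -
  have d0: "det A \<noteq> 0" using assms invertible_det_nz by blast
  define x where "x = matrix_inv A *v axis j 1"
  have "A *v x = axis j 1" unfolding x_def
    by (simp add: matrix_vector_mul_assoc matinv_props[OF assms])
  then have "x = (\<chi> k. det(\<chi> r s. if s = k then axis j 1 $ r else A $ r $ s) / det A)"
    using cramer[OF d0] by blast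
  then have "x $ i = det(\<chi> r s. if s = i then axis j 1 $ r else A $ r $ s) / det A" by simp
  moreover have "x $ i = matrix_inv A $ i $ j"
    unfolding x_def matrix_vector_mult_def axis_def
    by (simp add: if_distrib cong: if_cong)
  ultimately show ?thesis by simp
qed

lemma ldiff_det:
  fixes M :: "real^'d::finite \<Rightarrow> real^'d^'d"
  assumes "\<And>r s. ldiff a (\<lambda>q. M q $ r $ s) p"
  shows "ldiff a (\<lambda>q. det (M q)) p"
  unfolding det_def
  by (rule ldiff_sum) (auto intro!: ldiff_mult ldiff_prod assms simp: finite_permutations)

locale st =
  fixes U :: "(real^'d::finite) set" and g :: "real^'d \<Rightarrow> real^'d^'d"
    and l nn :: "real^'d \<Rightarrow> real^'d" and m :: "nat \<Rightarrow> real^'d \<Rightarrow> real^'d"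
  assumes card4: "CARD('d) \<ge> 4"
    and openU: "open U"
    and smooth: "\<forall>a b. C_inf_on U (\<lambda>p. g p $ a $ b)"
    and symg: "\<forall>p\<in>U. \<forall>a b. g p $ a $ b = g p $ b $ a"
    and frame: "null_frame g U l nn m"
begin

lemma fp: "p \<in> U \<Longrightarrow> frame_pt (g p) (l p) (nn p) (\<lambda>i. m i p)"
  using symg frame card4 unfolding null_frame_def frame_pt_def gdot_gm[symmetric] by auto

lemma invg: "p \<in> U \<Longrightarrow> invertible (g p)"
  using frame_pt.invG[OF fp] by blast

lemma ginv_frame: "p \<in> U \<Longrightarrow> matrix_inv (g p) $ a $ c =
   l p $ a * nn p $ c + nn p $ a * l p $ c + (\<Sum>k\<in>{2..<CARD('d)}. m k p $ a * m k p $ c)"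
  using frame_pt.matinv[OF fp] frame_pt.K_def[OF fp] by simp

lemma ginv_sym: "p \<in> U \<Longrightarrow> matrix_inv (g p) $ a $ c = matrix_inv (g p) $ c $ a"
  by (simp add: ginv_frame mult_ac add_ac)

lemma GiG: "p \<in> U \<Longrightarrow> (\<Sum>e\<in>UNIV. matrix_inv (g p) $ a $ e * g p $ e $ f) = (if a = f then 1 else 0)"
  using matinv_props(2)[OF invg, of p] by (simp add: matrix_matrix_mult_def mat_def vec_eq_iff)

lemma GGi: "p \<in> U \<Longrightarrow> (\<Sum>e\<in>UNIV. g p $ a $ e * matrix_inv (g p) $ e $ f) = (if a = f then 1 else 0)"
  using matinv_props(1)[OF invg, of p] by (simp add: matrix_matrix_mult_def mat_def vec_eq_iff)

lemma cinf: "C_inf_on U f \<Longrightarrow> p \<in> U \<Longrightarrow> (foldr pd ds f) differentiable (at p)"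
  unfolding C_inf_on_def using differentiable_on_eq_differentiable_at[OF openU] by blast

lemma g0d: "p \<in> U \<Longrightarrow> (\<lambda>q. g q $ a $ b) differentiable (at p)"
  using cinf[of "\<lambda>q. g q $ a $ b" p "[]"] smooth by simp
lemma g1d: "p \<in> U \<Longrightarrow> pd c (\<lambda>q. g q $ a $ b) differentiable (at p)"
  using cinf[of "\<lambda>q. g q $ a $ b" p "[c]"] smooth by simp
lemma g2d: "p \<in> U \<Longrightarrow> pd c (pd d (\<lambda>q. g q $ a $ b)) differentiable (at p)"
  using cinf[of "\<lambda>q. g q $ a $ b" p "[c, d]"] smooth by simp

lemma g0l: "p \<in> U \<Longrightarrow> ldiff x (\<lambda>q. g q $ a $ b) p" by (rule ldiff_of_differentiable[OF g0d])
lemma g1l: "p \<in> U \<Longrightarrow> ldiff x (\<lambda>q. pd c (\<lambda>q. g q $ a $ b) q) p"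
  by (rule ldiff_of_differentiable[OF g1d])

lemma ldiff_ginv: "p \<in> U \<Longrightarrow> ldiff x (\<lambda>q. matrix_inv (g q) $ i $ j) p"
proof -
  assume p: "p \<in> U"
  have "ldiff x (\<lambda>q. det (\<chi> r s. if s = i then axis j 1 $ r else g q $ r $ s) / det (g q)) p"
  proof (rule ldiff_divide)
    show "ldiff x (\<lambda>q. det (\<chi> r s. if s = i then axis j 1 $ r else g q $ r $ s)) p"
      apply (rule ldiff_det)
      subgoal for r s by (cases "s = i") (auto intro: g0l[OF p])
      done
    show "ldiff x (\<lambda>q. det (g q)) p" by (rule ldiff_det) (rule g0l[OF p])
    show "det (g p) \<noteq> 0" using invg[OF p] invertible_det_nz by blast
  qed
  then show ?thesis
    by (rule ldiff_cong[OF openU p, rotated]) (simp add: matinv_cramer[OF invg])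
qed

lemma ldiff_chr: "p \<in> U \<Longrightarrow> ldiff x (\<lambda>q. christoffel g q a b c) p"
  unfolding christoffel_def
  by (intro ldiff_mult ldiff_const ldiff_sum ldiff_add ldiff_diff ldiff_ginv g1l) auto

end


lemma sum_swap_mult:
  "(\<Sum>e\<in>(UNIV::'d::finite set). A e * (\<Sum>f\<in>(UNIV::'d set). B e f * X f)) = (\<Sum>f\<in>UNIV. (\<Sum>e\<in>UNIV. A e * B e f) * (X f::real))"
  by (simp add: sum_distrib_left sum_distrib_right mult.assoc) (rule sum.swap)

lemma sum_delta_mult: "(\<Sum>f\<in>(UNIV::'d::finite set). (if a = f then 1 else 0) * (X f::real)) = X a"
proof -
  have "(\<Sum>f\<in>(UNIV::'d set). (if a = f then 1 else 0) * X f) = (\<Sum>f\<in>UNIV. if a = f then X f else 0)"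
    by (rule sum.cong) auto
  then show ?thesis by simp
qed

lemma pair_sym_gen:
  fixes T :: "'d \<Rightarrow> 'd \<Rightarrow> 'd \<Rightarrow> 'd \<Rightarrow> real"
  assumes A1: "\<And>a b c d. T a b c d = - T b a c d" and A2: "\<And>a b c d. T a b c d = - T a b d c"
    and C: "\<And>a b c d. T a b c d + T a c d b + T a d b c = 0"
  shows "T a b c d = T c d a b"
  using C[of a b c d] C[of b c d a] C[of c d a b] C[of d a b c]
    A1[of a b c d] A1[of a c d b] A1[of a d b c] A1[of b c d a] A1[of b d a c] A1[of b a c d]
    A1[of c d a b] A1[of c a b d] A1[of c b d a] A1[of d a b c] A1[of d b c a] A1[of d c a b]
    A2[of a b c d] A2[of a c d b] A2[of a d b c] A2[of b c d a] A2[of b d a c] A2[of b a c d]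
    A2[of c d a b] A2[of c a b d] A2[of c b d a] A2[of d a b c] A2[of d b c a] A2[of d c a b]
  by linarith

context st begin

definition "dg p c a b = pd c (\<lambda>q. g q $ a $ b) p"
definition "ddg p c d a b = pd c (pd d (\<lambda>q. g q $ a $ b)) p"
definition "Gl p a b c = (\<Sum>e\<in>UNIV. g p $ a $ e * christoffel g p e b c)"
definition "pG p c a d b = pd c (\<lambda>q. christoffel g q a d b) p"
definition "Q p c a d b = (\<Sum>e\<in>UNIV. Gl p e c a * christoffel g p e d b)"

lemma dg_sym: "p \<in> U \<Longrightarrow> dg p c a b = dg p c b a"
  unfolding dg_def by (rule pd_cong[OF openU]) (use symg in auto)

lemma ddg_sym: "p \<in> U \<Longrightarrow> ddg p c d a b = ddg p c d b a"
  unfolding ddg_def by (rule pd_cong[OF openU], assumption, rule pd_cong[OF openU]) (use symg in auto)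

lemma ddg_schwarz: "p \<in> U \<Longrightarrow> ddg p c d a b = ddg p d c a b"
  unfolding ddg_def
proof (rule schwarz[OF openU])
  show "(\<lambda>q. g q $ a $ b) differentiable_on U"
    using smooth unfolding C_inf_on_def by (metis foldr.simps(1) id_apply)
  show "pd c (\<lambda>q. g q $ a $ b) differentiable_on U"
    using smooth unfolding C_inf_on_def by (metis foldr_Cons foldr_Nil comp_apply id_apply)
  show "pd d (\<lambda>q. g q $ a $ b) differentiable_on U"
    using smooth unfolding C_inf_on_def by (metis foldr_Cons foldr_Nil comp_apply id_apply)
qed

lemma chr_dg: "christoffel g p a b c = (1/2) * (\<Sum>f\<in>UNIV. matrix_inv (g p) $ a $ f * (dg p b f c + dg p c f b - dg p f b c))"
  by (simp add: christoffel_def dg_def)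

lemma Gl_formula: "p \<in> U \<Longrightarrow> Gl p a b c = (1/2) * (dg p b a c + dg p c a b - dg p a b c)"
proof -
  assume p: "p \<in> U"
  define X where "X f = dg p b f c + dg p c f b - dg p f b c" for f
  have "Gl p a b c = (\<Sum>e\<in>UNIV. g p $ a $ e * ((1/2) * (\<Sum>f\<in>UNIV. matrix_inv (g p) $ e $ f * X f)))"
    by (simp add: Gl_def chr_dg X_def)
  also have "\<dots> = (1/2) * (\<Sum>e\<in>UNIV. g p $ a $ e * (\<Sum>f\<in>UNIV. matrix_inv (g p) $ e $ f * X f))"
    by (simp add: sum_distrib_left mult_ac)
  also have "\<dots> = (1/2) * X a"
    by (simp add: sum_swap_mult GGi[OF p] sum_delta_mult)
  finally show ?thesis by (simp add: X_def)
qed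

lemma chr_Gl: "p \<in> U \<Longrightarrow> christoffel g p a b c = (\<Sum>f\<in>UNIV. matrix_inv (g p) $ a $ f * Gl p f b c)"
  by (simp add: chr_dg Gl_formula sum_distrib_left mult_ac)

lemma chr_sym: "p \<in> U \<Longrightarrow> christoffel g p a b c = christoffel g p a c b"
proof -
  assume p: "p \<in> U"
  have "\<And>f. dg p f b c = dg p f c b" using dg_sym[OF p] by blast
  then show ?thesis by (simp add: chr_dg add.commute)
qed

lemma dg_Gl: "p \<in> U \<Longrightarrow> dg p c a e = Gl p a c e + Gl p e c a"
proof -
  assume p: "p \<in> U"
  have "dg p c e a = dg p c a e" "dg p a e c = dg p a c e" "dg p e c a = dg p e a c"
    using dg_sym[OF p] by blast+
  then show ?thesis by (simp add: Gl_formula[OF p] algebra_simps)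
qed

end


context st begin

lemma F6: "p \<in> U \<Longrightarrow> (\<Sum>e\<in>UNIV. dg p c a e * christoffel g p e d b + g p $ a $ e * pG p c e d b)
   = (1/2) * (ddg p c d a b + ddg p c b a d - ddg p c a d b)"
proof -
  assume p: "p \<in> U"
  have "pd c (\<lambda>q. \<Sum>e\<in>UNIV. g q $ a $ e * christoffel g q e d b) p
      = (\<Sum>e\<in>UNIV. dg p c a e * christoffel g p e d b + g p $ a $ e * pG p c e d b)"
    by (simp add: pd_sum pd_mult ldiff_mult g0l[OF p] ldiff_chr[OF p] dg_def pG_def)
  moreover have "pd c (\<lambda>q. \<Sum>e\<in>UNIV. g q $ a $ e * christoffel g q e d b) p
      = pd c (\<lambda>q. (1/2) * (pd d (\<lambda>q. g q $ a $ b) q + pd b (\<lambda>q. g q $ a $ d) q - pd a (\<lambda>q. g q $ d $ b) q)) p"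
    by (rule pd_cong[OF openU p]) (simp add: Gl_def[symmetric] Gl_formula dg_def)
  moreover have "\<dots> = (1/2) * (ddg p c d a b + ddg p c b a d - ddg p c a d b)"
  proof -
    have l1: "ldiff c (\<lambda>q. pd d (\<lambda>q. g q $ a $ b) q + pd b (\<lambda>q. g q $ a $ d) q) p"
      by (intro ldiff_add g1l[OF p])
    have l2: "ldiff c (\<lambda>q. pd d (\<lambda>q. g q $ a $ b) q + pd b (\<lambda>q. g q $ a $ d) q - pd a (\<lambda>q. g q $ d $ b) q) p"
      by (intro ldiff_diff l1 g1l[OF p])
    show ?thesis
      by (simp only: pd_cmult[OF l2] pd_diff[OF l1 g1l[OF p]] pd_add[OF g1l[OF p] g1l[OF p]] ddg_def)
  qed
  ultimately show ?thesis by simp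
qed

lemma riem_formula: "p \<in> U \<Longrightarrow> riemann g p a b c d =
   (1/2) * (ddg p c d a b + ddg p c b a d - ddg p c a d b - ddg p d c a b - ddg p d b a c + ddg p d a c b)
   - Q p c a d b + Q p d a c b"
proof -
  assume p: "p \<in> U"
  let ?G = "\<lambda>e. g p $ a $ e" and ?C = "christoffel g p"
  have R: "riemann g p a b c d = (\<Sum>e\<in>UNIV. ?G e * pG p c e d b) - (\<Sum>e\<in>UNIV. ?G e * pG p d e c b)
      + ((\<Sum>f\<in>UNIV. Gl p a c f * ?C f d b) - (\<Sum>f\<in>UNIV. Gl p a d f * ?C f c b))"
  proof -
    have 1: "(\<Sum>e\<in>UNIV. ?G e * (\<Sum>f\<in>UNIV. ?C e c f * ?C f d b - ?C e d f * ?C f c b))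
       = (\<Sum>f\<in>UNIV. Gl p a c f * ?C f d b) - (\<Sum>f\<in>UNIV. Gl p a d f * ?C f c b)"
      by (simp add: Gl_def sum_subtractf right_diff_distrib sum_swap_mult[where X="\<lambda>f. ?C f d b"]
          sum_swap_mult[where X="\<lambda>f. ?C f c b"])
    show ?thesis unfolding riemann_def riemann_up_def pG_def[symmetric] 1[symmetric]
      by (simp add: sum_subtractf sum.distrib algebra_simps)
  qed
  have A: "(\<Sum>e\<in>UNIV. ?G e * pG p c e d b) = (1/2) * (ddg p c d a b + ddg p c b a d - ddg p c a d b)
      - (\<Sum>e\<in>UNIV. Gl p a c e * ?C e d b) - Q p c a d b"
  proof -
    have "(\<Sum>e\<in>UNIV. dg p c a e * ?C e d b) = (\<Sum>e\<in>UNIV. Gl p a c e * ?C e d b) + Q p c a d b"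
      by (simp add: dg_Gl[OF p] Q_def distrib_right sum.distrib)
    then show ?thesis using F6[OF p, of c a d b] by (simp add: sum.distrib field_simps; linarith)
  qed
  have B: "(\<Sum>e\<in>UNIV. ?G e * pG p d e c b) = (1/2) * (ddg p d c a b + ddg p d b a c - ddg p d a c b)
      - (\<Sum>e\<in>UNIV. Gl p a d e * ?C e c b) - Q p d a c b"
  proof -
    have "(\<Sum>e\<in>UNIV. dg p d a e * ?C e c b) = (\<Sum>e\<in>UNIV. Gl p a d e * ?C e c b) + Q p d a c b"
      by (simp add: dg_Gl[OF p] Q_def distrib_right sum.distrib)
    then show ?thesis using F6[OF p, of d a c b] by (simp add: sum.distrib field_simps; linarith)
  qed
  show ?thesis using R A B by (simp add: algebra_simps)
qed

lemma Q_sym: "p \<in> U \<Longrightarrow> Q p c a d b = Q p d b c a"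
proof -
  assume p: "p \<in> U"
  have "Q p c a d b = (\<Sum>e\<in>UNIV. \<Sum>f\<in>UNIV. Gl p e c a * matrix_inv (g p) $ e $ f * Gl p f d b)"
    by (simp add: Q_def chr_Gl[OF p] sum_distrib_left mult_ac)
  also have "\<dots> = (\<Sum>f\<in>UNIV. \<Sum>e\<in>UNIV. Gl p e c a * matrix_inv (g p) $ e $ f * Gl p f d b)"
    by (rule sum.swap)
  also have "\<dots> = Q p d b c a"
    by (simp add: Q_def chr_Gl[OF p] sum_distrib_left mult_ac ginv_sym[OF p, of _ "_"])
  finally show ?thesis .
qed


lemma riem_anti: "p \<in> U \<Longrightarrow> riemann g p a b c d = - riemann g p b a c d"
proof -
  assume p: "p \<in> U"
  show ?thesis
    using riem_formula[OF p, of a b c d] riem_formula[OF p, of b a c d]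
      ddg_sym[OF p, of c d b a] ddg_sym[OF p, of c a b d] ddg_sym[OF p, of c b d a]
      ddg_sym[OF p, of d c b a] ddg_sym[OF p, of d a b c] ddg_sym[OF p, of d b c a]
      ddg_schwarz[OF p, of c d a b] Q_sym[OF p, of d b c a] Q_sym[OF p, of c b d a]
    by (simp add: field_simps)
qed

lemma ru_anti: "riemann_up g p a b c d = - riemann_up g p a b d c"
  unfolding riemann_up_def by (simp add: sum_subtractf)

lemma pG_sym: "p \<in> U \<Longrightarrow> pG p c a d b = pG p c a b d"
  unfolding pG_def by (rule pd_cong[OF openU]) (auto intro: chr_sym)

lemma ru_cyc: "p \<in> U \<Longrightarrow> riemann_up g p a b c d + riemann_up g p a c d b + riemann_up g p a d b c = 0"
proof -
  assume p: "p \<in> U"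
  let ?C = "christoffel g p"
  have s: "(\<Sum>e\<in>UNIV. ?C a c e * ?C e d b - ?C a d e * ?C e c b)
     + (\<Sum>e\<in>UNIV. ?C a d e * ?C e b c - ?C a b e * ?C e d c)
     + (\<Sum>e\<in>UNIV. ?C a b e * ?C e c d - ?C a c e * ?C e b d) = 0"
  proof -
    have "\<And>e. ?C e d b = ?C e b d" "\<And>e. ?C e c b = ?C e b c" "\<And>e. ?C e d c = ?C e c d"
      using chr_sym[OF p] by blast+
    then show ?thesis by (simp add: sum.distrib[symmetric] sum_subtractf[symmetric])
  qed
  show ?thesis
    using s pG_sym[OF p, of c a d b] pG_sym[OF p, of d a c b] pG_sym[OF p, of b a d c]
    unfolding riemann_up_def pG_def[symmetric] by linarith
qed

lemma riem_anti2: "riemann g p a b c d = - riemann g p a b d c"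
  unfolding riemann_def by (subst ru_anti) (simp add: sum_negf)

lemma riem_cyc: "p \<in> U \<Longrightarrow> riemann g p a b c d + riemann g p a c d b + riemann g p a d b c = 0"
proof -
  assume p: "p \<in> U"
  have "riemann g p a b c d + riemann g p a c d b + riemann g p a d b c
     = (\<Sum>e\<in>UNIV. g p $ a $ e * (riemann_up g p e b c d + riemann_up g p e c d b + riemann_up g p e d b c))"
    unfolding riemann_def by (simp add: sum.distrib distrib_left)
  then show ?thesis by (simp add: ru_cyc[OF p])
qed

lemma riem_pair: "p \<in> U \<Longrightarrow> riemann g p a b c d = riemann g p c d a b"
  by (rule pair_sym_gen[of "riemann g p"]) (auto intro: riem_anti riem_anti2 riem_cyc)

lemma ru_via: "p \<in> U \<Longrightarrow> riemann_up g p a b c d = (\<Sum>e\<in>UNIV. matrix_inv (g p) $ a $ e * riemann g p e b c d)"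
proof -
  assume p: "p \<in> U"
  have "(\<Sum>e\<in>UNIV. matrix_inv (g p) $ a $ e * riemann g p e b c d)
     = (\<Sum>f\<in>UNIV. (\<Sum>e\<in>UNIV. matrix_inv (g p) $ a $ e * g p $ e $ f) * riemann_up g p f b c d)"
    unfolding riemann_def by (rule sum_swap_mult)
  also have "\<dots> = riemann_up g p a b c d" by (simp add: GiG[OF p] sum_delta_mult)
  finally show ?thesis by simp
qed

lemma ricci_sym: "p \<in> U \<Longrightarrow> ricci g p b d = ricci g p d b"
proof -
  assume p: "p \<in> U"
  let ?Gi = "matrix_inv (g p)"
  have "ricci g p b d = (\<Sum>a\<in>UNIV. \<Sum>e\<in>UNIV. ?Gi $ a $ e * riemann g p a d e b)"
    unfolding ricci_def by (simp add: ru_via[OF p] riem_pair[OF p, of _ b _ d])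
  also have "\<dots> = (\<Sum>e\<in>UNIV. \<Sum>a\<in>UNIV. ?Gi $ a $ e * riemann g p a d e b)" by (rule sum.swap)
  also have "\<dots> = ricci g p d b"
    unfolding ricci_def by (simp add: ru_via[OF p] ginv_sym[OF p, of _ "_"])
  finally show ?thesis .
qed

end

context st begin

lemma sum_delta_mult': "(\<Sum>f\<in>(UNIV::'d set). (if f = a then 1 else 0) * (X f::real)) = X a"
proof -
  have "(\<Sum>f\<in>(UNIV::'d set). (if f = a then 1 else 0) * X f) = (\<Sum>f\<in>UNIV. if f = a then X f else 0)"
    by (rule sum.cong) auto
  then show ?thesis by simp
qed

abbreviation "W p a b c d \<equiv> weyl_comp g p a b c d"

lemma gsym: "p \<in> U \<Longrightarrow> g p $ a $ b = g p $ b $ a" using symg by blast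

lemma W_anti1: "p \<in> U \<Longrightarrow> W p a b c d = - W p b a c d"
  by (simp add: weyl_comp_def Let_def riem_anti[of p a b c d] algebra_simps)

lemma W_anti2: "W p a b c d = - W p a b d c"
  by (simp add: weyl_comp_def Let_def riem_anti2[of p a b c d] algebra_simps)

lemma W_cyc: "p \<in> U \<Longrightarrow> W p a b c d + W p a c d b + W p a d b c = 0"
proof -
  assume p: "p \<in> U"
  have r: "riemann g p a b c d = - riemann g p a c d b - riemann g p a d b c"
    using riem_cyc[OF p, of a b c d] by linarith
  have gs: "\<And>x y. g p $ x $ y = g p $ y $ x" using gsym[OF p] by blast
  have rs: "\<And>x y. ricci g p x y = ricci g p y x" using ricci_sym[OF p] by blast
  show ?thesis
    by (simp add: weyl_comp_def Let_def r algebra_simps) (simp add: gs rs algebra_simps)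
qed


lemma W_pair: "p \<in> U \<Longrightarrow> W p a b c d = W p c d a b"
  by (rule pair_sym_gen[of "W p"]) (auto intro: W_anti1 W_anti2 W_cyc)

lemma W_trace: "p \<in> U \<Longrightarrow> (\<Sum>a\<in>UNIV. \<Sum>c\<in>UNIV. matrix_inv (g p) $ a $ c * W p a b c d) = 0"
proof -
  assume p: "p \<in> U"
  let ?Gi = "matrix_inv (g p)" and ?G = "g p" and ?R = "ricci g p"
  define N where "N = real CARD('d)"
  define k where "k = 1 / (N - 2)"
  define s where "s = scalar_curv g p / ((N - 1) * (N - 2))"
  have gs: "\<And>x y. g p $ x $ y = g p $ y $ x" using gsym[OF p] by blast
  have T1: "(\<Sum>a\<in>UNIV. \<Sum>c\<in>UNIV. ?Gi $ a $ c * riemann g p a b c d) = ?R b d"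
  proof -
    have "(\<Sum>a\<in>UNIV. \<Sum>c\<in>UNIV. ?Gi $ a $ c * riemann g p a b c d)
        = (\<Sum>c\<in>UNIV. \<Sum>a\<in>UNIV. ?Gi $ c $ a * riemann g p a b c d)"
      by (subst sum.swap) (simp add: ginv_sym[OF p, of _ "_"])
    also have "\<dots> = ?R b d" by (simp add: ricci_def ru_via[OF p])
    finally show ?thesis .
  qed
  have T2: "(\<Sum>a\<in>UNIV. \<Sum>c\<in>UNIV. ?Gi $ a $ c * ?G $ a $ c) = N"
  proof -
    have "\<And>a. (\<Sum>c\<in>UNIV. ?Gi $ a $ c * ?G $ a $ c) = 1"
      using GiG[OF p] by (simp add: gs[of _ "_"])
    then show ?thesis by (simp add: N_def)
  qed
  have T3: "(\<Sum>a\<in>UNIV. \<Sum>c\<in>UNIV. ?Gi $ a $ c * (?G $ a $ d * ?R b c)) = ?R b d"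
  proof -
    have "(\<Sum>a\<in>UNIV. \<Sum>c\<in>UNIV. ?Gi $ a $ c * (?G $ a $ d * ?R b c))
        = (\<Sum>c\<in>UNIV. (\<Sum>a\<in>UNIV. ?Gi $ c $ a * ?G $ a $ d) * ?R b c)"
      by (subst sum.swap) (simp add: sum_distrib_right sum_distrib_left ginv_sym[OF p, of _ "_"] mult_ac)
    also have "\<dots> = ?R b d" by (simp add: GiG[OF p] sum_delta_mult sum_delta_mult')
    finally show ?thesis .
  qed
  have T4: "(\<Sum>a\<in>UNIV. \<Sum>c\<in>UNIV. ?Gi $ a $ c * (?G $ b $ c * ?R a d)) = ?R b d"
  proof -
    have "(\<Sum>a\<in>UNIV. \<Sum>c\<in>UNIV. ?Gi $ a $ c * (?G $ b $ c * ?R a d))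
        = (\<Sum>a\<in>UNIV. (\<Sum>c\<in>UNIV. ?Gi $ a $ c * ?G $ c $ b) * ?R a d)"
      by (simp add: sum_distrib_right sum_distrib_left gs[of b] mult_ac)
    also have "\<dots> = ?R b d" by (simp add: GiG[OF p] sum_delta_mult sum_delta_mult')
    finally show ?thesis .
  qed
  have T5: "(\<Sum>a\<in>UNIV. \<Sum>c\<in>UNIV. ?Gi $ a $ c * (?G $ b $ d * ?R a c)) = ?G $ b $ d * scalar_curv g p"
    by (simp add: scalar_curv_def sum_distrib_left mult_ac)
  have T6: "(\<Sum>a\<in>UNIV. \<Sum>c\<in>UNIV. ?Gi $ a $ c * (?G $ a $ d * ?G $ b $ c)) = ?G $ b $ d"
  proof -
    have "(\<Sum>a\<in>UNIV. \<Sum>c\<in>UNIV. ?Gi $ a $ c * (?G $ a $ d * ?G $ b $ c))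
        = (\<Sum>c\<in>UNIV. (\<Sum>a\<in>UNIV. ?Gi $ c $ a * ?G $ a $ d) * ?G $ b $ c)"
      by (subst sum.swap) (simp add: sum_distrib_right sum_distrib_left ginv_sym[OF p, of _ "_"] mult_ac)
    also have "\<dots> = ?G $ b $ d" by (simp add: GiG[OF p] sum_delta_mult sum_delta_mult')
    finally show ?thesis .
  qed
  have Wexp: "\<And>a c. W p a b c d = riemann g p a b c d
      - k * (?G $ a $ c * ?R b d - ?G $ a $ d * ?R b c - ?G $ b $ c * ?R a d + ?G $ b $ d * ?R a c)
      + s * (?G $ a $ c * ?G $ b $ d - ?G $ a $ d * ?G $ b $ c)"
    by (simp add: weyl_comp_def Let_def k_def s_def N_def)
  have "(\<Sum>a\<in>UNIV. \<Sum>c\<in>UNIV. ?Gi $ a $ c * W p a b c d)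
     = (\<Sum>a\<in>UNIV. \<Sum>c\<in>UNIV. ?Gi $ a $ c * riemann g p a b c d)
       - k * ((\<Sum>a\<in>UNIV. \<Sum>c\<in>UNIV. ?Gi $ a $ c * ?G $ a $ c) * ?R b d
              - (\<Sum>a\<in>UNIV. \<Sum>c\<in>UNIV. ?Gi $ a $ c * (?G $ a $ d * ?R b c))
              - (\<Sum>a\<in>UNIV. \<Sum>c\<in>UNIV. ?Gi $ a $ c * (?G $ b $ c * ?R a d))
              + (\<Sum>a\<in>UNIV. \<Sum>c\<in>UNIV. ?Gi $ a $ c * (?G $ b $ d * ?R a c)))
       + s * ((\<Sum>a\<in>UNIV. \<Sum>c\<in>UNIV. ?Gi $ a $ c * ?G $ a $ c) * ?G $ b $ d
              - (\<Sum>a\<in>UNIV. \<Sum>c\<in>UNIV. ?Gi $ a $ c * (?G $ a $ d * ?G $ b $ c)))"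
    unfolding Wexp
    by (simp add: algebra_simps sum.distrib sum_subtractf sum_distrib_left sum_distrib_right)
  also have "\<dots> = ?R b d - k * (N * ?R b d - ?R b d - ?R b d + ?G $ b $ d * scalar_curv g p)
       + s * (N * ?G $ b $ d - ?G $ b $ d)"
    by (simp only: T1 T2 T3 T4 T5 T6)
  also have "\<dots> = 0"
  proof -
    have N4: "N \<ge> 4" using card4 by (simp add: N_def)
    then have n2: "N - 2 \<noteq> 0" and n1: "N - 1 \<noteq> 0" by auto
    have e1: "k * (N * ?R b d - ?R b d - ?R b d + ?G $ b $ d * scalar_curv g p)
        = ?R b d + k * (?G $ b $ d * scalar_curv g p)"
      using n2 by (simp add: k_def field_simps)
    have e2: "s * (N * ?G $ b $ d - ?G $ b $ d) = k * (?G $ b $ d * scalar_curv g p)"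
    proof -
      have "s * (N * ?G $ b $ d - ?G $ b $ d) = (scalar_curv g p * ?G $ b $ d) * ((N - 1) / ((N - 1) * (N - 2)))"
        by (simp add: s_def algebra_simps)
      also have "(N - 1) / ((N - 1) * (N - 2)) = 1 / (N - 2)" using n1 by simp
      finally show ?thesis by (simp add: k_def mult_ac)
    qed
    show ?thesis using e1 e2 by linarith
  qed
  finally show ?thesis .
qed

end

lemma sum_prod_split:
  "(\<Sum>y\<in>B. \<Sum>z\<in>C. G y z) = (\<Sum>j\<in>B \<times> C. G (fst j) (snd j))"
  by (simp add: sum.cartesian_product split_def)

lemma sum_rot3:
  "(\<Sum>x\<in>(UNIV::'a::finite set). \<Sum>y\<in>(UNIV::'b::finite set). \<Sum>z\<in>(UNIV::'c::finite set). F x y z)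
   = (\<Sum>y\<in>UNIV. \<Sum>z\<in>UNIV. \<Sum>x\<in>UNIV. (F x y z :: real))"
proof -
  have "(\<Sum>x\<in>(UNIV::'a set). \<Sum>y\<in>(UNIV::'b set). \<Sum>z\<in>(UNIV::'c set). F x y z)
      = (\<Sum>x\<in>(UNIV::'a set). \<Sum>j\<in>(UNIV::'b set) \<times> (UNIV::'c set). F x (fst j) (snd j))"
    by (rule sum.cong[OF refl], rule sum_prod_split)
  also have "\<dots> = (\<Sum>j\<in>(UNIV::'b set) \<times> (UNIV::'c set). \<Sum>x\<in>(UNIV::'a set). F x (fst j) (snd j))"
    by (rule sum.swap)
  also have "\<dots> = (\<Sum>y\<in>UNIV. \<Sum>z\<in>UNIV. \<Sum>x\<in>UNIV. F x y z)"
    by (rule sum_prod_split[symmetric])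
  finally show ?thesis .
qed

lemma sum_pair4:
  "(\<Sum>a\<in>(UNIV::'a::finite set). \<Sum>b\<in>(UNIV::'b::finite set). \<Sum>c\<in>(UNIV::'c::finite set). \<Sum>d\<in>(UNIV::'e::finite set). F a b c d)
   = (\<Sum>c\<in>UNIV. \<Sum>d\<in>UNIV. \<Sum>a\<in>UNIV. \<Sum>b\<in>UNIV. (F a b c d :: real))"
proof -
  have "(\<Sum>a\<in>(UNIV::'a set). \<Sum>b\<in>(UNIV::'b set). \<Sum>c\<in>(UNIV::'c set). \<Sum>d\<in>(UNIV::'e set). F a b c d)
      = (\<Sum>a\<in>(UNIV::'a set). \<Sum>b\<in>(UNIV::'b set). \<Sum>j\<in>(UNIV::'c set) \<times> (UNIV::'e set). F a b (fst j) (snd j))"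
    by (rule sum.cong[OF refl], rule sum.cong[OF refl], rule sum_prod_split)
  also have "\<dots> = (\<Sum>i\<in>(UNIV::'a set) \<times> (UNIV::'b set). \<Sum>j\<in>(UNIV::'c set) \<times> (UNIV::'e set). F (fst i) (snd i) (fst j) (snd j))"
    by (rule sum_prod_split)
  also have "\<dots> = (\<Sum>j\<in>(UNIV::'c set) \<times> (UNIV::'e set). \<Sum>i\<in>(UNIV::'a set) \<times> (UNIV::'b set). F (fst i) (snd i) (fst j) (snd j))"
    by (rule sum.swap)
  also have "\<dots> = (\<Sum>j\<in>(UNIV::'c set) \<times> (UNIV::'e set). \<Sum>a\<in>(UNIV::'a set). \<Sum>b\<in>(UNIV::'b set). F a b (fst j) (snd j))"
    by (rule sum.cong[OF refl], rule sum_prod_split[symmetric])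
  also have "\<dots> = (\<Sum>c\<in>UNIV. \<Sum>d\<in>UNIV. \<Sum>a\<in>UNIV. \<Sum>b\<in>UNIV. F a b c d)"
    by (rule sum_prod_split[symmetric])
  finally show ?thesis .
qed

context st begin

lemma wl_anti1: "p \<in> U \<Longrightarrow> weyl g p u v w x = - weyl g p v u w x"
proof -
  assume p: "p \<in> U"
  have "weyl g p u v w x = (\<Sum>b\<in>UNIV. \<Sum>a\<in>UNIV. \<Sum>c\<in>UNIV. \<Sum>d\<in>UNIV. W p a b c d * u $ a * v $ b * w $ c * x $ d)"
    unfolding weyl_def by (rule sum.swap)
  also have "\<dots> = (\<Sum>b\<in>UNIV. \<Sum>a\<in>UNIV. \<Sum>c\<in>UNIV. \<Sum>d\<in>UNIV. - (W p b a c d * v $ b * u $ a * w $ c * x $ d))"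
    apply (intro sum.cong refl)
    subgoal for b a c d using W_anti1[OF p, of a b c d] by simp
    done
  also have "\<dots> = - weyl g p v u w x"
    unfolding weyl_def by (simp add: sum_negf)
  finally show ?thesis .
qed

lemma wl_anti2: "weyl g p u v w x = - weyl g p u v x w"
proof -
  have "weyl g p u v w x = (\<Sum>a\<in>UNIV. \<Sum>b\<in>UNIV. \<Sum>d\<in>UNIV. \<Sum>c\<in>UNIV. W p a b c d * u $ a * v $ b * w $ c * x $ d)"
    unfolding weyl_def by (rule sum.cong[OF refl], rule sum.cong[OF refl], rule sum.swap)
  also have "\<dots> = (\<Sum>a\<in>UNIV. \<Sum>b\<in>UNIV. \<Sum>d\<in>UNIV. \<Sum>c\<in>UNIV. - (W p a b d c * u $ a * v $ b * x $ d * w $ c))"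
    apply (intro sum.cong refl)
    subgoal for a b d c using W_anti2[of p a b c d] by simp
    done
  also have "\<dots> = - weyl g p u v x w"
    unfolding weyl_def by (simp add: sum_negf)
  finally show ?thesis .
qed

lemma wl_pair: "p \<in> U \<Longrightarrow> weyl g p u v w x = weyl g p w x u v"
proof -
  assume p: "p \<in> U"
  have "weyl g p u v w x = (\<Sum>c\<in>UNIV. \<Sum>d\<in>UNIV. \<Sum>a\<in>UNIV. \<Sum>b\<in>UNIV. W p a b c d * u $ a * v $ b * w $ c * x $ d)"
    unfolding weyl_def by (rule sum_pair4)
  also have "\<dots> = (\<Sum>c\<in>UNIV. \<Sum>d\<in>UNIV. \<Sum>a\<in>UNIV. \<Sum>b\<in>UNIV. W p c d a b * w $ c * x $ d * u $ a * v $ b)"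
    apply (intro sum.cong refl)
    subgoal for c d a b using W_pair[OF p, of a b c d] by simp
    done
  also have "\<dots> = weyl g p w x u v"
    unfolding weyl_def by simp
  finally show ?thesis .
qed

lemma wl_cyc: "p \<in> U \<Longrightarrow> weyl g p u v w x + weyl g p u w x v + weyl g p u x v w = 0"
proof -
  assume p: "p \<in> U"
  have 1: "weyl g p u w x v = (\<Sum>a\<in>UNIV. \<Sum>b\<in>UNIV. \<Sum>c\<in>UNIV. \<Sum>d\<in>UNIV. W p a c d b * u $ a * v $ b * w $ c * x $ d)"
  proof -
    have "weyl g p u w x v = (\<Sum>a\<in>UNIV. \<Sum>c\<in>UNIV. \<Sum>d\<in>UNIV. \<Sum>b\<in>UNIV. W p a c d b * u $ a * w $ c * x $ d * v $ b)"
      unfolding weyl_def by simp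
    also have "\<dots> = (\<Sum>a\<in>UNIV. \<Sum>b\<in>UNIV. \<Sum>c\<in>UNIV. \<Sum>d\<in>UNIV. W p a c d b * u $ a * w $ c * x $ d * v $ b)"
      by (rule sum.cong[OF refl], rule sum_rot3[symmetric])
    also have "\<dots> = (\<Sum>a\<in>UNIV. \<Sum>b\<in>UNIV. \<Sum>c\<in>UNIV. \<Sum>d\<in>UNIV. W p a c d b * u $ a * v $ b * w $ c * x $ d)"
      by (intro sum.cong refl) (simp add: mult_ac)
    finally show ?thesis .
  qed
  have 2: "weyl g p u x v w = (\<Sum>a\<in>UNIV. \<Sum>b\<in>UNIV. \<Sum>c\<in>UNIV. \<Sum>d\<in>UNIV. W p a d b c * u $ a * v $ b * w $ c * x $ d)"
  proof -
    have "weyl g p u x v w = (\<Sum>a\<in>UNIV. \<Sum>d\<in>UNIV. \<Sum>b\<in>UNIV. \<Sum>c\<in>UNIV. W p a d b c * u $ a * x $ d * v $ b * w $ c)"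
      unfolding weyl_def by simp
    also have "\<dots> = (\<Sum>a\<in>UNIV. \<Sum>b\<in>UNIV. \<Sum>c\<in>UNIV. \<Sum>d\<in>UNIV. W p a d b c * u $ a * x $ d * v $ b * w $ c)"
      by (rule sum.cong[OF refl], rule sum_rot3)
    also have "\<dots> = (\<Sum>a\<in>UNIV. \<Sum>b\<in>UNIV. \<Sum>c\<in>UNIV. \<Sum>d\<in>UNIV. W p a d b c * u $ a * v $ b * w $ c * x $ d)"
      by (intro sum.cong refl) (simp add: mult_ac)
    finally show ?thesis .
  qed
  have "weyl g p u v w x + weyl g p u w x v + weyl g p u x v w
     = (\<Sum>a\<in>UNIV. \<Sum>b\<in>UNIV. \<Sum>c\<in>UNIV. \<Sum>d\<in>UNIV. (W p a b c d + W p a c d b + W p a d b c) * u $ a * v $ b * w $ c * x $ d)"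
    unfolding 1 2 unfolding weyl_def by (simp add: sum.distrib algebra_simps)
  also have "\<dots> = 0" by (simp add: W_cyc[OF p])
  finally show ?thesis .
qed

end

context st begin

lemma wl_add1: "weyl g p (u1 + u2) v w x = weyl g p u1 v w x + weyl g p u2 v w x"
  unfolding weyl_def by (simp add: algebra_simps sum.distrib)
lemma wl_scale1: "weyl g p (c *\<^sub>R u) v w x = c * weyl g p u v w x"
  unfolding weyl_def by (simp add: sum_distrib_left mult_ac)
lemma wl_zero1: "weyl g p 0 v w x = 0"
  unfolding weyl_def by simp
lemma wl_sum1: "weyl g p (\<Sum>k\<in>S. f k) v w x = (\<Sum>k\<in>S. weyl g p (f k) v w x)"
  by (induction S rule: infinite_finite_induct) (simp_all add: wl_zero1 wl_add1)
lemma wl_diff1: "weyl g p (u1 - u2) v w x = weyl g p u1 v w x - weyl g p u2 v w x"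
  using wl_add1[of p u1 "- u2"] wl_scale1[of p "-1" u2] by simp

lemma wl_add2: "p \<in> U \<Longrightarrow> weyl g p v (u1 + u2) w x = weyl g p v u1 w x + weyl g p v u2 w x"
  by (simp add: wl_anti1[of p v] wl_add1)
lemma wl_scale2: "p \<in> U \<Longrightarrow> weyl g p v (c *\<^sub>R u) w x = c * weyl g p v u w x"
  by (simp add: wl_anti1[of p v] wl_scale1)
lemma wl_sum2: "p \<in> U \<Longrightarrow> weyl g p v (\<Sum>k\<in>S. f k) w x = (\<Sum>k\<in>S. weyl g p v (f k) w x)"
  by (simp add: wl_anti1[of p v] wl_sum1 sum_negf)
lemma wl_add3: "p \<in> U \<Longrightarrow> weyl g p v w (u1 + u2) x = weyl g p v w u1 x + weyl g p v w u2 x"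
  by (simp add: wl_pair[of p v w] wl_add1)
lemma wl_scale3: "p \<in> U \<Longrightarrow> weyl g p v w (c *\<^sub>R u) x = c * weyl g p v w u x"
  by (simp add: wl_pair[of p v w] wl_scale1)
lemma wl_sum3: "p \<in> U \<Longrightarrow> weyl g p v w (\<Sum>k\<in>S. f k) x = (\<Sum>k\<in>S. weyl g p v w (f k) x)"
  by (simp add: wl_pair[of p v w] wl_sum1)
lemma wl_add4: "p \<in> U \<Longrightarrow> weyl g p v w x (u1 + u2) = weyl g p v w x u1 + weyl g p v w x u2"
  by (simp add: wl_anti2[of p v w x] wl_add3)
lemma wl_scale4: "p \<in> U \<Longrightarrow> weyl g p v w x (c *\<^sub>R u) = c * weyl g p v w x u"
  by (simp add: wl_anti2[of p v w x] wl_scale3)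
lemma wl_sum4: "p \<in> U \<Longrightarrow> weyl g p v w x (\<Sum>k\<in>S. f k) = (\<Sum>k\<in>S. weyl g p v w x (f k))"
  by (simp add: wl_anti2[of p v w x] wl_sum3 sum_negf)

lemma wl_trace: "p \<in> U \<Longrightarrow> weyl g p (l p) v (nn p) x + weyl g p (nn p) v (l p) x
   + (\<Sum>k\<in>{2..<CARD('d)}. weyl g p (m k p) v (m k p) x) = 0"
proof -
  assume p: "p \<in> U"
  let ?Gi = "matrix_inv (g p)"
  let ?F = "\<lambda>a b c d. W p a b c d * ?Gi $ a $ c * v $ b * x $ d"
  have "weyl g p (l p) v (nn p) x + weyl g p (nn p) v (l p) x
     + (\<Sum>k\<in>{2..<CARD('d)}. weyl g p (m k p) v (m k p) x)
     = (\<Sum>a\<in>UNIV. \<Sum>b\<in>UNIV. \<Sum>c\<in>UNIV. \<Sum>d\<in>UNIV. ?F a b c d)"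
    unfolding weyl_def ginv_frame[OF p]
    by (simp add: algebra_simps sum.distrib sum_distrib_left sum_distrib_right sum.swap[of _ "{2..<CARD('d)}"])
  also have "\<dots> = (\<Sum>a\<in>UNIV. \<Sum>c\<in>UNIV. \<Sum>d\<in>UNIV. \<Sum>b\<in>UNIV. ?F a b c d)"
    by (rule sum.cong[OF refl], rule sum_rot3)
  also have "\<dots> = (\<Sum>d\<in>UNIV. \<Sum>b\<in>UNIV. \<Sum>a\<in>UNIV. \<Sum>c\<in>UNIV. ?F a b c d)"
    by (rule sum_pair4)
  also have "\<dots> = (\<Sum>b\<in>UNIV. \<Sum>d\<in>UNIV. v $ b * x $ d * (\<Sum>a\<in>UNIV. \<Sum>c\<in>UNIV. ?Gi $ a $ c * W p a b c d))"
    by (subst sum.swap) (simp add: sum_distrib_left mult_ac)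
  also have "\<dots> = 0" by (simp add: W_trace[OF p])
  finally show ?thesis .
qed

lemma wl_deriv:
  assumes "\<And>a. ((\<lambda>t. U1 t $ a) has_real_derivative D1 $ a) (at 0)"
    "\<And>a. ((\<lambda>t. U2 t $ a) has_real_derivative D2 $ a) (at 0)"
    "\<And>a. ((\<lambda>t. U3 t $ a) has_real_derivative D3 $ a) (at 0)"
    "\<And>a. ((\<lambda>t. U4 t $ a) has_real_derivative D4 $ a) (at 0)"
  shows "((\<lambda>t. weyl g p (U1 t) (U2 t) (U3 t) (U4 t)) has_real_derivative
     weyl g p D1 (U2 0) (U3 0) (U4 0) + weyl g p (U1 0) D2 (U3 0) (U4 0)
     + weyl g p (U1 0) (U2 0) D3 (U4 0) + weyl g p (U1 0) (U2 0) (U3 0) D4) (at 0)"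
proof -
  have "((\<lambda>t. weyl g p (U1 t) (U2 t) (U3 t) (U4 t)) has_real_derivative
     (\<Sum>a\<in>UNIV. \<Sum>b\<in>UNIV. \<Sum>c\<in>UNIV. \<Sum>d\<in>UNIV. W p a b c d *
        (D1 $ a * U2 0 $ b * U3 0 $ c * U4 0 $ d + U1 0 $ a * D2 $ b * U3 0 $ c * U4 0 $ d
         + U1 0 $ a * U2 0 $ b * D3 $ c * U4 0 $ d + U1 0 $ a * U2 0 $ b * U3 0 $ c * D4 $ d))) (at 0)"
    unfolding weyl_def
    by (intro DERIV_sum) (auto intro!: derivative_eq_intros assms simp: algebra_simps)
  then show ?thesis
    unfolding weyl_def by (simp add: algebra_simps sum.distrib)
qed

end

context st begin

lemma cd_const: "((\<lambda>t. (c::real^'d) $ a) has_real_derivative (0::real^'d) $ a) (at 0)"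
  by simp
lemma cd_lin: "((\<lambda>t. (A + t *\<^sub>R B) $ a) has_real_derivative (B::real^'d) $ a) (at 0)"
  by (auto intro!: derivative_eq_intros)
lemma cd_boost: "((\<lambda>t. ((1 + t * eps) *\<^sub>R B) $ a) has_real_derivative (eps *\<^sub>R (B::real^'d)) $ a) (at 0)"
  by (auto intro!: derivative_eq_intros)
lemma cd_lin2: "((\<lambda>t. (A - (t * c) *\<^sub>R B) $ a) has_real_derivative (- c *\<^sub>R (B::real^'d)) $ a) (at 0)"
  by (auto intro!: derivative_eq_intros)
lemma cd_quad: "((\<lambda>t. (A + t *\<^sub>R B - (t^2 * c / 2) *\<^sub>R C) $ a) has_real_derivative (B::real^'d) $ a) (at 0)"
  by (auto intro!: derivative_eq_intros)

lemma boost_val: "p \<in> U \<Longrightarrow> boost_change g l m eps p i j = 2 * eps * Omega0 g l m p i j"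
proof -
  assume p: "p \<in> U"
  have D: "((\<lambda>t. weyl g p ((1 + t * eps) *\<^sub>R l p) (m i p) ((1 + t * eps) *\<^sub>R l p) (m j p)) has_real_derivative
     weyl g p (eps *\<^sub>R l p) (m i p) (l p) (m j p) + weyl g p (l p) 0 (l p) (m j p)
     + weyl g p (l p) (m i p) (eps *\<^sub>R l p) (m j p) + weyl g p (l p) (m i p) (l p) 0) (at 0)"
    using wl_deriv[OF cd_boost cd_const cd_boost cd_const, of p eps "l p" "m i p" eps "l p" "m j p"] by simp
  have z: "weyl g p (l p) 0 (l p) (m j p) = 0" "weyl g p (l p) (m i p) (l p) 0 = 0"
    using wl_scale2[OF p, of "l p" 0 "m i p" "l p" "m j p"] wl_scale4[OF p, of "l p" "m i p" "l p" 0 "m j p"] by simp_all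
  show ?thesis
    unfolding boost_change_def Omega0_def DERIV_imp_deriv[OF D] z
    by (simp add: wl_scale1 wl_scale3[OF p])
qed

lemma nullrot_l_val: "p \<in> U \<Longrightarrow> nullrot_l_change g l m z p i j = 0"
proof -
  assume p: "p \<in> U"
  have D: "((\<lambda>t. weyl g p (l p) (m i p - (t * z i) *\<^sub>R l p) (l p) (m j p - (t * z j) *\<^sub>R l p)) has_real_derivative
     weyl g p 0 (m i p) (l p) (m j p) + weyl g p (l p) (- z i *\<^sub>R l p) (l p) (m j p)
     + weyl g p (l p) (m i p) 0 (m j p) + weyl g p (l p) (m i p) (l p) (- z j *\<^sub>R l p)) (at 0)"
    using wl_deriv[OF cd_const cd_lin2 cd_const cd_lin2, of p "l p" "m i p" "z i" "l p" "l p" "m j p" "z j" "l p"]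
    by simp
  have 1: "weyl g p (l p) (l p) (l p) (m j p) = 0"
    using wl_anti1[OF p, of "l p" "l p" "l p" "m j p"] by simp
  have 2: "weyl g p (l p) (m i p) (l p) (l p) = 0"
    using wl_anti2[of p "l p" "m i p" "l p" "l p"] by simp
  have 3: "weyl g p (l p) (m i p) 0 (m j p) = 0"
    using wl_scale3[OF p, of "l p" "m i p" 0 "l p" "m j p"] by simp
  have 4: "weyl g p (l p) (- (z i *\<^sub>R l p)) (l p) (m j p) = 0"
    using wl_scale2[OF p, of "l p" "- z i" "l p" "l p" "m j p"] 1 by simp
  have 5: "weyl g p (l p) (m i p) (l p) (- (z j *\<^sub>R l p)) = 0"
    using wl_scale4[OF p, of "l p" "m i p" "l p" "- z j" "l p"] 2 by simp
  show ?thesis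
    unfolding nullrot_l_change_def DERIV_imp_deriv[OF D]
    by (simp add: wl_zero1 3 4 5)
qed


lemma wl_neg2: "p \<in> U \<Longrightarrow> weyl g p v (- u) w x = - weyl g p v u w x"
  using wl_scale2[of p v "-1" u w x] by simp
lemma wl_neg4: "p \<in> U \<Longrightarrow> weyl g p v w x (- u) = - weyl g p v w x u"
  using wl_scale4[of p v w x "-1" u] by simp

lemma spin_val: "p \<in> U \<Longrightarrow> spin_change g l m A p i j =
    (\<Sum>k\<in>{2..<CARD('d)}. A i k * Omega0 g l m p k j) + (\<Sum>k\<in>{2..<CARD('d)}. A j k * Omega0 g l m p i k)"
proof -
  assume p: "p \<in> U"
  define Si where "Si = (\<Sum>k\<in>{2..<CARD('d)}. A i k *\<^sub>R m k p)"
  define Sj where "Sj = (\<Sum>k\<in>{2..<CARD('d)}. A j k *\<^sub>R m k p)"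
  have D: "((\<lambda>t. weyl g p (l p) (m i p + t *\<^sub>R Si) (l p) (m j p + t *\<^sub>R Sj)) has_real_derivative
     weyl g p 0 (m i p) (l p) (m j p) + weyl g p (l p) Si (l p) (m j p)
     + weyl g p (l p) (m i p) 0 (m j p) + weyl g p (l p) (m i p) (l p) Sj) (at 0)"
    using wl_deriv[OF cd_const cd_lin cd_const cd_lin, of p "l p" "m i p" Si "l p" "m j p" Sj] by simp
  have 3: "weyl g p (l p) (m i p) 0 (m j p) = 0"
    using wl_scale3[OF p, of "l p" "m i p" 0 "l p" "m j p"] by simp
  show ?thesis
    unfolding spin_change_def Si_def[symmetric] Sj_def[symmetric] DERIV_imp_deriv[OF D]
    by (simp add: wl_zero1 3 Si_def Sj_def wl_sum2[OF p] wl_sum4[OF p] wl_scale2[OF p] wl_scale4[OF p] Omega0_def)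
qed

lemma nrn_val: "p \<in> U \<Longrightarrow> nullrot_n_change g l nn m z p i j =
    weyl g p (\<Sum>k\<in>{2..<CARD('d)}. z k *\<^sub>R m k p) (m i p) (l p) (m j p)
  + weyl g p (l p) (m i p) (\<Sum>k\<in>{2..<CARD('d)}. z k *\<^sub>R m k p) (m j p)
  - z i * weyl g p (l p) (nn p) (l p) (m j p) - z j * weyl g p (l p) (m i p) (l p) (nn p)"
proof -
  assume p: "p \<in> U"
  define s where "s = (\<Sum>k\<in>{2..<CARD('d)}. z k *\<^sub>R m k p)"
  define Z where "Z = (\<Sum>k\<in>{2..<CARD('d)}. (z k)^2)"
  have D: "((\<lambda>t. weyl g p (l p + t *\<^sub>R s - (t^2 * Z / 2) *\<^sub>R nn p) (m i p - (t * z i) *\<^sub>R nn p)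
        (l p + t *\<^sub>R s - (t^2 * Z / 2) *\<^sub>R nn p) (m j p - (t * z j) *\<^sub>R nn p)) has_real_derivative
     weyl g p s (m i p) (l p) (m j p) + weyl g p (l p) (- z i *\<^sub>R nn p) (l p) (m j p)
     + weyl g p (l p) (m i p) s (m j p) + weyl g p (l p) (m i p) (l p) (- z j *\<^sub>R nn p)) (at 0)"
    using wl_deriv[OF cd_quad cd_lin2 cd_quad cd_lin2, of p "l p" s Z "nn p" "m i p" "z i" "nn p"
        "l p" s Z "nn p" "m j p" "z j" "nn p"] by simp
  show ?thesis
    unfolding nullrot_n_change_def Let_def s_def[symmetric] Z_def[symmetric] DERIV_imp_deriv[OF D]
    by (simp add: wl_neg2[OF p] wl_neg4[OF p] wl_scale2[OF p] wl_scale4[OF p])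
qed

end

context st begin

lemma psi_n_zero:
  assumes p: "p \<in> U" and j: "j \<in> {2..<CARD('d)}"
    and P0: "\<forall>i\<in>{2..<CARD('d)}. \<forall>j\<in>{2..<CARD('d)}. \<forall>k\<in>{2..<CARD('d)}. Psi0 g l m p i j k = 0"
  shows "weyl g p (l p) (nn p) (l p) (m j p) = 0"
proof -
  have T: "weyl g p (l p) (l p) (nn p) (m j p) + weyl g p (nn p) (l p) (l p) (m j p)
     + (\<Sum>k\<in>{2..<CARD('d)}. weyl g p (m k p) (l p) (m k p) (m j p)) = 0"
    by (rule wl_trace[OF p])
  have 1: "weyl g p (l p) (l p) (nn p) (m j p) = 0"
    using wl_anti1[OF p, of "l p" "l p" "nn p" "m j p"] by simp
  have 2: "weyl g p (nn p) (l p) (l p) (m j p) = - weyl g p (l p) (nn p) (l p) (m j p)"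
    by (rule wl_anti1[OF p])
  have 3: "(\<Sum>k\<in>{2..<CARD('d)}. weyl g p (m k p) (l p) (m k p) (m j p)) = 0"
  proof (rule sum.neutral, rule ballI)
    fix k assume k: "k \<in> {2..<CARD('d)}"
    have "weyl g p (m k p) (l p) (m k p) (m j p) = - Psi0 g l m p k k j"
      unfolding Psi0_def by (rule wl_anti1[OF p])
    then show "weyl g p (m k p) (l p) (m k p) (m j p) = 0" using P0 k j by simp
  qed
  show ?thesis using T 1 2 3 by simp
qed

lemma gauge_imp_wand:
  assumes p: "p \<in> U" and G: "Omega1_gauge_invariant g U l nn m"
  shows "multiple_WAND g l m p"
proof -
  let ?I = "{2..<CARD('d)}"
  have Om: "Omega0 g l m p i j = 0" if "i \<in> ?I" "j \<in> ?I" for i j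
  proof -
    have "boost_change g l m 1 p i j = 0" using G p that unfolding Omega1_gauge_invariant_def by blast
    then show ?thesis by (simp add: boost_val[OF p])
  qed
  define P where "P i j k = weyl g p (l p) (m i p) (m j p) (m k p)" for i j k
  define Ps where "Ps j = weyl g p (l p) (nn p) (l p) (m j p)" for j
  have E: "P j k i + P i k j - (if i = k then Ps j else 0) - (if j = k then Ps i else 0) = 0"
    if i: "i \<in> ?I" and j: "j \<in> ?I" and k: "k \<in> ?I" for i j k
  proof -
    define z where "z = (\<lambda>q::nat. if q = k then (1::real) else 0)"
    have s: "(\<Sum>q\<in>?I. z q *\<^sub>R m q p) = m k p"
    proof -
      have "(\<Sum>q\<in>?I. z q *\<^sub>R m q p) = (\<Sum>q\<in>?I. if q = k then m q p else 0)"
        by (rule sum.cong) (auto simp: z_def)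
      then show ?thesis using k by simp
    qed
    have "nullrot_n_change g l nn m z p i j = 0" using G p i j unfolding Omega1_gauge_invariant_def by blast
    then have "weyl g p (m k p) (m i p) (l p) (m j p) + weyl g p (l p) (m i p) (m k p) (m j p)
       - z i * weyl g p (l p) (nn p) (l p) (m j p) - z j * weyl g p (l p) (m i p) (l p) (nn p) = 0"
      by (simp add: nrn_val[OF p] s)
    moreover have "weyl g p (m k p) (m i p) (l p) (m j p) = P j k i"
      unfolding P_def by (rule wl_pair[OF p])
    moreover have "weyl g p (l p) (m i p) (l p) (nn p) = Ps i"
      unfolding Ps_def by (rule wl_pair[OF p])
    ultimately show ?thesis by (auto simp: z_def P_def Ps_def)
  qed
  have anti: "P i j k = - P i k j" for i j k unfolding P_def by (rule wl_anti2)
  have cyc: "P i j k + P j k i + P k i j = 0" for i j k unfolding P_def by (rule wl_cyc[OF p])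
  have Ps0: "Ps i = 0" if "i \<in> ?I" for i
    using E[OF that that that] anti[of i i i] by simp
  have E': "P j k i + P i k j = 0" if "i \<in> ?I" "j \<in> ?I" "k \<in> ?I" for i j k
    using E[OF that] Ps0[of i] Ps0[of j] that by (simp split: if_split_asm)
  have Pz: "P i j k = 0" if i: "i \<in> ?I" and j: "j \<in> ?I" and k: "k \<in> ?I" for i j k
    using E'[OF i j k] E'[OF j k i] cyc[of i j k] anti[of i k j] anti[of j i k] by linarith
  show ?thesis
    unfolding multiple_WAND_def using Om Pz by (auto simp: Psi0_def P_def)
qed

lemma wand_imp_gauge:
  assumes W: "\<forall>p\<in>U. multiple_WAND g l m p"
  shows "Omega1_gauge_invariant g U l nn m"
  unfolding Omega1_gauge_invariant_def
proof (intro ballI conjI allI impI)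
  let ?I = "{2..<CARD('d)}"
  fix p i j assume p: "p \<in> U" and i: "i \<in> ?I" and j: "j \<in> ?I"
  have Om: "\<And>q a b. q \<in> U \<Longrightarrow> a \<in> ?I \<Longrightarrow> b \<in> ?I \<Longrightarrow> Omega0 g l m q a b = 0"
    using W unfolding multiple_WAND_def by blast
  have Pz: "\<And>a b c. a \<in> ?I \<Longrightarrow> b \<in> ?I \<Longrightarrow> c \<in> ?I \<Longrightarrow> Psi0 g l m p a b c = 0"
    using W p unfolding multiple_WAND_def by blast
  {
    fix xi :: "real^'d"
    have "\<And>mu. pd mu (\<lambda>q. Omega0 g l m q i j) p = pd mu (\<lambda>q. 0) p"
      by (rule pd_cong[OF openU p]) (use Om[OF _ i j] in simp)
    then show "coord_change g l m xi p i j = 0" by (simp add: coord_change_def)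
  }
  {
    fix eps :: real
    show "boost_change g l m eps p i j = 0" by (simp add: boost_val[OF p] Om[OF p i j])
  }
  {
    fix A :: "nat \<Rightarrow> nat \<Rightarrow> real"
    have s1: "(\<Sum>k\<in>?I. A i k * Omega0 g l m p k j) = 0"
      by (rule sum.neutral) (use Om[OF p _ j] in auto)
    have s2: "(\<Sum>k\<in>?I. A j k * Omega0 g l m p i k) = 0"
      by (rule sum.neutral) (use Om[OF p i] in auto)
    show "spin_change g l m A p i j = 0" by (simp add: spin_val[OF p] s1 s2)
  }
  {
    fix z :: "nat \<Rightarrow> real"
    show "nullrot_l_change g l m z p i j = 0" by (rule nullrot_l_val[OF p])
  }
  {
    fix z :: "nat \<Rightarrow> real"
    have Ps: "\<And>a. a \<in> ?I \<Longrightarrow> weyl g p (l p) (nn p) (l p) (m a p) = 0"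
      using psi_n_zero[OF p] Pz by blast
    have 1: "weyl g p (\<Sum>k\<in>?I. z k *\<^sub>R m k p) (m i p) (l p) (m j p) = 0"
    proof -
      have "weyl g p (\<Sum>k\<in>?I. z k *\<^sub>R m k p) (m i p) (l p) (m j p)
          = (\<Sum>k\<in>?I. z k * weyl g p (l p) (m j p) (m k p) (m i p))"
        by (simp add: wl_sum1 wl_scale1 wl_pair[OF p, of "m _ p" "m i p"])
      also have "\<dots> = 0" using Pz j i by (simp add: Psi0_def)
      finally show ?thesis .
    qed
    have 2: "weyl g p (l p) (m i p) (\<Sum>k\<in>?I. z k *\<^sub>R m k p) (m j p) = 0"
      using Pz i j by (simp add: wl_sum3[OF p] wl_scale3[OF p] Psi0_def)
    have 3: "weyl g p (l p) (m i p) (l p) (nn p) = 0"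
      using wl_pair[OF p, of "l p" "m i p" "l p" "nn p"] Ps[OF i] by simp
    show "nullrot_n_change g l nn m z p i j = 0"
      by (simp add: nrn_val[OF p] 1 2 3 Ps[OF j])
  }
qed

end

theorem lemma1:
  fixes U :: "(real^'d::finite) set"
    and g :: "real^'d \<Rightarrow> real^'d^'d"
    and l nn :: "real^'d \<Rightarrow> real^'d"
    and m :: "nat \<Rightarrow> real^'d \<Rightarrow> real^'d"
  assumes "CARD('d) \<ge> 4"
    and "open U"
    and "\<forall>a b. C_inf_on U (\<lambda>p. g p $ a $ b)"
    and "\<forall>p\<in>U. \<forall>a b. g p $ a $ b = g p $ b $ a"
    and "null_frame g U l nn m"
    and "\<forall>a. C_inf_on U (\<lambda>p. l p $ a) \<and> C_inf_on U (\<lambda>p. nn p $ a) \<and>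
             (\<forall>i\<in>{2..<CARD('d)}. C_inf_on U (\<lambda>p. m i p $ a))"
  shows "(Omega1_gauge_invariant g U l nn m \<longleftrightarrow> (\<forall>p\<in>U. multiple_WAND g l m p)) \<and>
         (Omega1_gauge_invariant g U l nn m \<longleftrightarrow>
            (\<forall>p\<in>U. (\<forall>i\<in>{2..<CARD('d)}. \<forall>j\<in>{2..<CARD('d)}. \<forall>k\<in>{2..<CARD('d)}. Psi0 g l m p i j k = 0) \<and>
                    (\<forall>i\<in>{2..<CARD('d)}. \<forall>j\<in>{2..<CARD('d)}. Omega0 g l m p i j = 0)))"
proof -
  interpret st U g l nn m
    using assms(1-5) by unfold_locales
  have A: "Omega1_gauge_invariant g U l nn m \<longleftrightarrow> (\<forall>p\<in>U. multiple_WAND g l m p)"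
    using gauge_imp_wand wand_imp_gauge by blast
  show ?thesis using A unfolding multiple_WAND_def by blast
qed


end
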